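(* Let $\Bbbk$ be an algebraically closed field of characteristic $2$ and let $\mathfrak{u}(\mathfrak{m})$ be the algebra generated by $a,b,c$ with relations $ab+ba=c$, $ac+ca=a$, $bc+cb=b$, $a^4=b^4=0$, $c^2+c=0$. Then the projective cover $P(V_0)$ and the injective envelope $I(V_0)$ of $V_0$ are both isomorphic to $M$, and the projective cover $P(V_1)$ and injective envelope $I(V_1)$ of $V_1$ are both isomorphic to $N$.
   Context: $V_0$ is the one-dimensional module with $a,b,c$ acting by $0$; $V_1$ is the three-dimensional module with basis $v_1,v_2,v_3$, $av_1=v_2$, $av_2=v_3$, $av_3=0$, $bv_1=0$, $bv_2=v_1$, $bv_3=v_2$, $cv_1=v_1$, $cv_2=0$, $cv_3=v_3$. $M$ is the $8$-dimensional module with basis $v_1,\dots,v_4,w_1,\dots,w_4$ and action: $av_i=v_{i+1}$ ($i=1,2,3$), $av_4=0$; $bv_1=bv_4=0$, $bv_i=v_{i-1}$ ($i=2,3$); $cv_i=v_i$ ($i=1,3$), $cv_i=0$ ($i=2,4$); $aw_i=w_{i+1}$ ($i=1,2,3$), $aw_4=0$; $bw_i=v_{i+2}$ ($i=1,2$), $bw_i=w_{i-1}$ ($i=3,4$); $cw_i=0$ ($i=1,3$), $cw_i=w_i$ ($i=2,4$). $N$ is the $8$-dimensional module with basis $v_1,\dots,v_4,w_1,\dots,w_4$ and action: $av_i=v_{i+1}$ ($i=1,2,3$), $av_4=0$; $bv_i=0$ ($i=1,2$), $bv_i=v_{i-1}$ ($i=3,4$); $cv_i=0$ ($i=1,3$),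 $cv_i=v_i$ ($i=2,4$); $aw_i=w_{i+1}$ ($i=1,2,3$), $aw_4=0$; $bw_i=v_i$ ($i=1,4$), $bw_i=v_i+w_{i-1}$ ($i=2,3$); $cw_i=w_i$ ($i=1,3$), $cw_i=0$ ($i=2,4$). *)

theory Defs
  imports "HOL-Computational_Algebra.Polynomial" "Jordan_Normal_Form.Matrix"
begin

text \<open>A finite-dimensional left module over the algebra u(m), generated by a, b, c,
  is represented on k^n (column vectors) by the three matrices through which a, b, c act.\<close>

record 'k urep =
  rdim :: nat
  ra :: "'k mat"
  rb :: "'k mat"
  rc :: "'k mat"

definition is_umod :: "'k::field urep \<Rightarrow> bool" where
  "is_umod V \<longleftrightarrow>
     (let n = rdim V; A = ra V; B = rb V; C = rc V in
      A \<in> carrier_mat n n \<and> B \<in> carrier_mat n n \<and> C \<in> carrier_mat n n \<and>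
      A * B + B * A = C \<and> A * C + C * A = A \<and> B * C + C * B = B \<and>
      A ^\<^sub>m 4 = 0\<^sub>m n n \<and> B ^\<^sub>m 4 = 0\<^sub>m n n \<and> C * C + C = 0\<^sub>m n n)"

definition is_hom :: "'k::field urep \<Rightarrow> 'k urep \<Rightarrow> 'k mat \<Rightarrow> bool" where
  "is_hom V W F \<longleftrightarrow> F \<in> carrier_mat (rdim W) (rdim V) \<and>
     F * ra V = ra W * F \<and> F * rb V = rb W * F \<and> F * rc V = rc W * F"

definition hom_surj :: "'k::field urep \<Rightarrow> 'k urep \<Rightarrow> 'k mat \<Rightarrow> bool" where
  "hom_surj V W F \<longleftrightarrow> (\<forall>y \<in> carrier_vec (rdim W). \<exists>x \<in> carrier_vec (rdim V). F *\<^sub>v x = y)"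

definition hom_inj :: "'k::field urep \<Rightarrow> 'k urep \<Rightarrow> 'k mat \<Rightarrow> bool" where
  "hom_inj V W F \<longleftrightarrow> (\<forall>x \<in> carrier_vec (rdim V). F *\<^sub>v x = 0\<^sub>v (rdim W) \<longrightarrow> x = 0\<^sub>v (rdim V))"

definition umod_iso :: "'k::field urep \<Rightarrow> 'k urep \<Rightarrow> bool" where
  "umod_iso V W \<longleftrightarrow> (\<exists>F G. is_hom V W F \<and> is_hom W V G \<and>
      G * F = 1\<^sub>m (rdim V) \<and> F * G = 1\<^sub>m (rdim W))"

definition is_submod :: "'k::field vec set \<Rightarrow> 'k urep \<Rightarrow> bool" where
  "is_submod L V \<longleftrightarrow> L \<subseteq> carrier_vec (rdim V) \<and> 0\<^sub>v (rdim V) \<in> L \<and>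
     (\<forall>x\<in>L. \<forall>y\<in>L. x + y \<in> L) \<and> (\<forall>s. \<forall>x\<in>L. s \<cdot>\<^sub>v x \<in> L) \<and>
     (\<forall>x\<in>L. ra V *\<^sub>v x \<in> L \<and> rb V *\<^sub>v x \<in> L \<and> rc V *\<^sub>v x \<in> L)"

definition is_projective :: "'k::field urep \<Rightarrow> bool" where
  "is_projective P \<longleftrightarrow> is_umod P \<and>
     (\<forall>X Y f g. is_umod X \<and> is_umod Y \<and> is_hom X Y f \<and> hom_surj X Y f \<and> is_hom P Y g
        \<longrightarrow> (\<exists>h. is_hom P X h \<and> f * h = g))"

definition is_injective :: "'k::field urep \<Rightarrow> bool" where
  "is_injective I \<longleftrightarrow> is_umod I \<and>
     (\<forall>X Y f g. is_umod X \<and> is_umod Y \<and> is_hom X Y f \<and> hom_inj X Y f \<and> is_hom X I g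
        \<longrightarrow> (\<exists>h. is_hom Y I h \<and> h * f = g))"

text \<open>Projective cover: projective P with an epimorphism P \<rightarrow> V whose kernel is superfluous.\<close>
definition is_projective_cover :: "'k::field urep \<Rightarrow> 'k mat \<Rightarrow> 'k urep \<Rightarrow> bool" where
  "is_projective_cover P p V \<longleftrightarrow> is_projective P \<and> is_umod V \<and> is_hom P V p \<and> hom_surj P V p \<and>
     (\<forall>L. is_submod L P \<and>
        (\<forall>x \<in> carrier_vec (rdim P). \<exists>l\<in>L. \<exists>k \<in> carrier_vec (rdim P).
            p *\<^sub>v k = 0\<^sub>v (rdim V) \<and> x = l + k)
        \<longrightarrow> L = carrier_vec (rdim P))"

text \<open>Injective envelope: injective I with a monomorphism V \<rightarrow> I whose image is essential.\<close>
definition is_injective_envelope :: "'k::field urep \<Rightarrow> 'k mat \<Rightarrow> 'k urep \<Rightarrow> bool" where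
  "is_injective_envelope I i V \<longleftrightarrow> is_injective I \<and> is_umod V \<and> is_hom V I i \<and> hom_inj V I i \<and>
     (\<forall>L. is_submod L I \<and> L \<noteq> {0\<^sub>v (rdim I)} \<longrightarrow>
        (\<exists>x \<in> carrier_vec (rdim V). i *\<^sub>v x \<in> L \<and> i *\<^sub>v x \<noteq> 0\<^sub>v (rdim I)))"

text \<open>Matrix of an endomorphism of k^n sending basis vector e_j to the sum of the basis vectors
  e_i with i in imgs!j (indices 0-based).\<close>
definition basis_mat :: "nat \<Rightarrow> nat list list \<Rightarrow> 'k::field mat" where
  "basis_mat n imgs = mat n n (\<lambda>(i, j). if i \<in> set (imgs ! j) then 1 else 0)"

definition V0 :: "'k::field urep" where
  "V0 = \<lparr>rdim = 1, ra = 0\<^sub>m 1 1, rb = 0\<^sub>m 1 1, rc = 0\<^sub>m 1 1\<rparr>"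

text \<open>V_1: basis v1,v2,v3 = indices 0,1,2.\<close>
definition V1 :: "'k::field urep" where
  "V1 = \<lparr>rdim = 3,
          ra = basis_mat 3 [[1],[2],[]],
          rb = basis_mat 3 [[],[0],[1]],
          rc = basis_mat 3 [[0],[],[2]]\<rparr>"

text \<open>M and N: basis v1..v4 = indices 0..3, w1..w4 = indices 4..7.\<close>
definition M :: "'k::field urep" where
  "M = \<lparr>rdim = 8,
         ra = basis_mat 8 [[1],[2],[3],[],[5],[6],[7],[]],
         rb = basis_mat 8 [[],[0],[1],[],[2],[3],[5],[6]],
         rc = basis_mat 8 [[0],[],[2],[],[],[5],[],[7]]\<rparr>"

definition N :: "'k::field urep" where
  "N = \<lparr>rdim = 8,
         ra = basis_mat 8 [[1],[2],[3],[],[5],[6],[7],[]],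
         rb = basis_mat 8 [[],[],[1],[2],[0],[1,4],[2,5],[3]],
         rc = basis_mat 8 [[],[1],[],[3],[4],[],[6],[]]\<rparr>"

end

theory Submission
  imports Defs "HOL-Library.Function_Algebras" "Jordan_Normal_Form.Determinant"
begin

definition char2 :: "'k::field itself \<Rightarrow> bool" where
  "char2 _ \<longleftrightarrow> (1::'k) + 1 = 0"

lemma char2I: "CHAR('k::field) = 2 \<Longrightarrow> char2 TYPE('k)"
  unfolding char2_def using of_nat_CHAR[where 'a='k] by simp

lemma char2_two: "char2 TYPE('k::field) \<Longrightarrow> (2::'k) = 0"
  unfolding char2_def by (metis one_add_one)

lemma of_nat_mod2: "(of_nat (n mod 2) :: 'k::field) = (if odd n then 1 else 0)"
proof (cases "even n")
  case True
  then have "n mod 2 = 0" by presburger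
  then show ?thesis using True by simp
next
  case False
  then have "n mod 2 = 1" by presburger
  then show ?thesis using False by simp
qed

lemma char2_of_nat: assumes "char2 TYPE('k::field)"
  shows "(of_nat n :: 'k) = (if odd n then 1 else 0)"
proof -
  have "(of_nat n :: 'k) = of_nat (2 * (n div 2) + n mod 2)" by (simp only: mult_div_mod_eq)
  also have "\<dots> = 2 * of_nat (n div 2) + of_nat (n mod 2)" by (simp only: of_nat_add of_nat_mult of_nat_numeral)
  also have "\<dots> = 0 * of_nat (n div 2) + of_nat (n mod 2)" by (simp only: char2_two[OF assms])
  also have "\<dots> = of_nat (n mod 2)" by (simp only: mult_zero_left add_0_left)
  finally show ?thesis by (simp only: of_nat_mod2)
qed

definition bmat :: "nat \<Rightarrow> nat \<Rightarrow> nat list list \<Rightarrow> 'k::field mat" where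
  "bmat n m I = mat n m (\<lambda>(i, j). if i \<in> set (I ! j) then 1 else 0)"

lemma basis_mat_bmat: "basis_mat n I = bmat n n I"
  unfolding basis_mat_def bmat_def by simp

lemma bmat_carrier[simp]: "bmat n m I \<in> carrier_mat n m"
  and bmat_dims[simp]: "dim_row (bmat n m I) = n" "dim_col (bmat n m I) = m"
  unfolding bmat_def by auto

lemma bmat_index[simp]: "i < n \<Longrightarrow> j < m \<Longrightarrow> bmat n m I $$ (i, j) = (if i \<in> set (I ! j) then 1 else 0)"
  unfolding bmat_def by simp

definition bprod :: "nat \<Rightarrow> nat list list \<Rightarrow> nat list list \<Rightarrow> nat list list" where
  "bprod n I1 I2 = map (\<lambda>J. filter (\<lambda>i. odd (length (filter (\<lambda>l. i \<in> set (I1 ! l)) J))) [0..<n]) I2"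

definition bsum :: "nat \<Rightarrow> nat list list \<Rightarrow> nat list list \<Rightarrow> nat list list" where
  "bsum n I1 I2 = map2 (\<lambda>J1 J2. filter (\<lambda>i. (i \<in> set J1) \<noteq> (i \<in> set J2)) [0..<n]) I1 I2"

definition bnorm :: "nat \<Rightarrow> nat list list \<Rightarrow> nat list list" where
  "bnorm n I = map (\<lambda>J. filter (\<lambda>i. i \<in> set J) [0..<n]) I"

definition bok :: "nat \<Rightarrow> nat list list \<Rightarrow> bool" where
  "bok m I \<longleftrightarrow> (\<forall>J \<in> set I. distinct J \<and> (\<forall>l \<in> set J. l < m))"

lemma bmat_eqI: assumes "length I1 = m" "length I2 = m" "bnorm n I1 = bnorm n I2"
  shows "(bmat n m I1 :: 'k::field mat) = bmat n m I2"
proof (rule eq_matI)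
  fix i j assume ij: "i < dim_row (bmat n m I2 :: 'k mat)" "j < dim_col (bmat n m I2 :: 'k mat)"
  from assms(3) have "bnorm n I1 ! j = bnorm n I2 ! j" by simp
  with ij assms(1,2) have "set (filter (\<lambda>i. i \<in> set (I1!j)) [0..<n]) = set (filter (\<lambda>i. i \<in> set (I2!j)) [0..<n])"
    unfolding bnorm_def by simp
  with ij have "(i \<in> set (I1!j)) = (i \<in> set (I2!j))" by (auto simp: set_eq_iff)
  with ij show "bmat n m I1 $$ (i, j) = (bmat n m I2 :: 'k mat) $$ (i, j)" by simp
qed auto

lemma bmat_mult: assumes c: "char2 TYPE('k::field)" and len: "length I2 = p" and ok: "bok m I2"
  shows "(bmat n m I1 :: 'k mat) * bmat m p I2 = bmat n p (bprod n I1 I2)"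
proof (rule eq_matI)
  fix i j assume ij: "i < dim_row (bmat n p (bprod n I1 I2) :: 'k mat)" "j < dim_col (bmat n p (bprod n I1 I2) :: 'k mat)"
  hence i: "i < n" and j: "j < p" by auto
  let ?J = "I2 ! j"
  have J: "distinct ?J" "set ?J \<subseteq> {..<m}" using ok j len unfolding bok_def by (auto simp: nth_mem)
  have "((bmat n m I1 :: 'k mat) * bmat m p I2) $$ (i, j) =
        (\<Sum>l<m. (if i \<in> set (I1 ! l) then 1 else 0) * (if l \<in> set ?J then 1 else 0))"
    using i j by (simp add: scalar_prod_def lessThan_atLeast0 row_def col_def)
  also have "\<dots> = (\<Sum>l\<in>{l. l < m \<and> l \<in> set ?J \<and> i \<in> set (I1 ! l)}. (1::'k))"
    by (rule sum.mono_neutral_cong_right) auto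
  also have "{l. l < m \<and> l \<in> set ?J \<and> i \<in> set (I1 ! l)} = set (filter (\<lambda>l. i \<in> set (I1 ! l)) ?J)"
    using J by auto
  also have "(\<Sum>l\<in>set (filter (\<lambda>l. i \<in> set (I1 ! l)) ?J). (1::'k)) = of_nat (length (filter (\<lambda>l. i \<in> set (I1 ! l)) ?J))"
    using distinct_card[OF distinct_filter[OF J(1)], of "\<lambda>l. i \<in> set (I1 ! l)"] by simp
  also have "\<dots> = (if odd (length (filter (\<lambda>l. i \<in> set (I1 ! l)) ?J)) then 1 else 0)"
    by (rule char2_of_nat[OF c])
  also have "\<dots> = bmat n p (bprod n I1 I2) $$ (i, j)"
    using i j len by (simp add: bprod_def)
  finally show "((bmat n m I1 :: 'k mat) * bmat m p I2) $$ (i, j) = bmat n p (bprod n I1 I2) $$ (i, j)" .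
qed auto

lemma bmat_add: assumes c: "char2 TYPE('k::field)" and len: "length I1 = m" "length I2 = m"
  shows "(bmat n m I1 :: 'k mat) + bmat n m I2 = bmat n m (bsum n I1 I2)"
proof (rule eq_matI)
  fix i j assume ij: "i < dim_row (bmat n m (bsum n I1 I2) :: 'k mat)" "j < dim_col (bmat n m (bsum n I1 I2) :: 'k mat)"
  hence i: "i < n" and j: "j < m" by auto
  have 2: "(1::'k) + 1 = 0" using c unfolding char2_def .
  show "((bmat n m I1 :: 'k mat) + bmat n m I2) $$ (i, j) = bmat n m (bsum n I1 I2) $$ (i, j)"
    using i j len 2 by (auto simp: bsum_def)
qed auto

lemma bmat_zero: "0\<^sub>m n m = (bmat n m (replicate m []) :: 'k::field mat)"
  by (rule eq_matI) auto

lemma bmat_one: "1\<^sub>m n = (bmat n n (map (\<lambda>j. [j]) [0..<n]) :: 'k::field mat)"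
  by (rule eq_matI) auto

definition btr :: "nat \<Rightarrow> nat \<Rightarrow> nat list list \<Rightarrow> nat list list" where
  "btr n m I = map (\<lambda>i. filter (\<lambda>j. i \<in> set (I ! j)) [0..<m]) [0..<n]"

lemma bmat_transpose: "transpose_mat (bmat n m I :: 'k::field mat) = bmat m n (btr n m I)"
  by (rule eq_matI) (auto simp: btr_def)

lemma bmat_pow4: "(A :: 'k::field mat) \<in> carrier_mat n n \<Longrightarrow> A ^\<^sub>m 4 = A * A * A * A"
  by (simp add: numeral_eq_Suc)

lemma bok_code[code]: "bok m I = list_all (\<lambda>J. distinct J \<and> list_all (\<lambda>l. l < m) J) I"
  unfolding bok_def by (simp add: list_all_iff)

definition QA :: "nat list list" where "QA = [[4], [5], [6], [7], [8], [9], [10], [11], [12], [13], [14], [15], [], [], [], []]"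
definition QB :: "nat list list" where "QB = [[1], [2], [3], [], [5], [6, 1], [7], [3], [9, 4], [10, 5], [11, 6], [7], [13, 8], [14], [15, 10], []]"
definition QC :: "nat list list" where "QC = [[], [1], [], [3], [4], [], [6], [], [], [9], [], [11], [12], [], [14], []]"

definition Wsg :: "('v \<Rightarrow> 'v) \<Rightarrow> ('v \<Rightarrow> 'v) \<Rightarrow> 'v \<Rightarrow> 'v list" where
  "Wsg a b f = [f, b f, b (b f), b (b (b f)),
           a f, a (b f), a (b (b f)), a (b (b (b f))),
           a (a f), a (a (b f)), a (a (b (b f))), a (a (b (b (b f)))),
           a (a (a f)), a (a (a (b f))), a (a (a (b (b f)))), a (a (a (b (b (b f)))))]"

lemma less16: "(j::nat) < 16 \<Longrightarrow> j = 0 \<or> j = 1 \<or> j = 2 \<or> j = 3 \<or> j = 4 \<or> j = 5 \<or> j = 6 \<or> j = 7 \<or>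
   j = 8 \<or> j = 9 \<or> j = 10 \<or> j = 11 \<or> j = 12 \<or> j = 13 \<or> j = 14 \<or> j = 15" by presburger
lemma Wsg_length[simp]: "length (Wsg a b f) = 16" by (simp add: Wsg_def)

locale urel =
  fixes a b c :: "'v::ab_group_add \<Rightarrow> 'v"
  assumes a_add: "a (u + v) = a u + a v" and b_add: "b (u + v) = b u + b v"
    and c_add: "c (u + v) = c u + c v"
    and ab: "a (b v) + b (a v) = c v" and ac: "a (c v) + c (a v) = a v"
    and bc: "b (c v) + c (b v) = b v" and cc: "c (c v) + c v = 0"
    and a4: "a (a (a (a v))) = 0" and b4: "b (b (b (b v))) = 0"
    and two: "v + v = 0"
begin

lemma two': "(v::'v) + (v + w) = w"
proof -
  have "v + (v + w) = (v + v) + w" by (simp only: add.assoc)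
  then show ?thesis by (simp only: two add_0_left)
qed
lemma swap: assumes "(x::'v) + y = z" shows "y = x + z" using two'[of x y] assms by simp
lemma a0: "a 0 = 0" using a_add[of 0 0] by simp
lemma b0: "b 0 = 0" using b_add[of 0 0] by simp
lemma c0: "c 0 = 0" using c_add[of 0 0] by simp
lemma ba: "b (a v) = a (b v) + c v" using swap[OF ab[of v]] .
lemma ca: "c (a v) = a (c v) + a v" using swap[OF ac[of v]] .
lemma cb: "c (b v) = b (c v) + b v" using swap[OF bc[of v]] .
lemma cc': "c (c v) = c v" using swap[OF cc[of v]] by simp

lemmas rw = ba ca cb cc' a4 b4 a_add b_add c_add a0 b0 c0 two two' add_ac

lemma Ws_A: "j < 16 \<Longrightarrow> c f = 0 \<Longrightarrow> a (Wsg a b f ! j) = sum_list (map (\<lambda>l. Wsg a b f ! l) (QA ! j))"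
  by (drule less16) (elim disjE; simp add: Wsg_def QA_def rw)
lemma Ws_B: "j < 16 \<Longrightarrow> c f = 0 \<Longrightarrow> b (Wsg a b f ! j) = sum_list (map (\<lambda>l. Wsg a b f ! l) (QB ! j))"
  by (drule less16) (elim disjE; simp add: Wsg_def QB_def rw)
lemma Ws_C: "j < 16 \<Longrightarrow> c f = 0 \<Longrightarrow> c (Wsg a b f ! j) = sum_list (map (\<lambda>l. Wsg a b f ! l) (QC ! j))"
  by (drule less16) (elim disjE; simp add: Wsg_def QC_def rw)
end

definition la :: "'k::field mat \<Rightarrow> (nat \<Rightarrow> 'k) \<Rightarrow> nat \<Rightarrow> 'k" where
  "la A v = (\<lambda>i. if i < dim_row A then (\<Sum>j\<in>{0..<dim_col A}. A $$ (i, j) * v j) else 0)"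

definition vf :: "'k::field vec \<Rightarrow> nat \<Rightarrow> 'k" where
  "vf x = (\<lambda>i. if i < dim_vec x then x $ i else 0)"

lemma la_add: "la A (v + w) = la A v + la A w"
  by (auto simp: la_def fun_eq_iff distrib_left sum.distrib)

lemma la_zero: "la A 0 = 0"
  by (auto simp: la_def fun_eq_iff)

lemma la_mult: assumes A: "A \<in> carrier_mat n m" and B: "B \<in> carrier_mat m p"
  shows "la (A * B) v = la A (la B v)"
proof (rule ext)
  fix i
  show "la (A * B) v i = la A (la B v) i"
  proof (cases "i < n")
    case True
    have "la (A * B) v i = (\<Sum>j\<in>{0..<p}. (\<Sum>l\<in>{0..<m}. A $$ (i, l) * B $$ (l, j)) * v j)"
      using A B True by (simp add: la_def scalar_prod_def)
    also have "\<dots> = (\<Sum>j\<in>{0..<p}. \<Sum>l\<in>{0..<m}. A $$ (i, l) * (B $$ (l, j) * v j))"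
      by (simp add: sum_distrib_right mult.assoc)
    also have "\<dots> = (\<Sum>l\<in>{0..<m}. \<Sum>j\<in>{0..<p}. A $$ (i, l) * (B $$ (l, j) * v j))"
      by (rule sum.swap)
    also have "\<dots> = la A (la B v) i"
      using A B True by (simp add: la_def sum_distrib_left)
    finally show ?thesis .
  qed (use A B in \<open>simp add: la_def\<close>)
qed

lemma la_addm: assumes A: "A \<in> carrier_mat n m" and B: "B \<in> carrier_mat n m"
  shows "la (A + B) v = la A v + la B v"
  using A B by (auto simp: la_def fun_eq_iff distrib_right sum.distrib)

lemma la_zero_mat: "la (0\<^sub>m n m) v = 0"
  by (auto simp: la_def fun_eq_iff)

lemma la_one_la: assumes "A \<in> carrier_mat n m" shows "la (1\<^sub>m n) (la A v) = la A v"
proof (rule ext)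
  fix i
  show "la (1\<^sub>m n) (la A v) i = la A v i"
  proof (cases "i < n")
    case True
    have "la (1\<^sub>m n) (la A v) i = (\<Sum>j\<in>{0..<n}. (if i = j then 1 else 0) * la A v j)"
      using True by (simp add: la_def)
    also have "\<dots> = (\<Sum>j\<in>{0..<n}. if j = i then la A v i else 0)" by (rule sum.cong) auto
    also have "\<dots> = la A v i" using True by simp
    finally show ?thesis .
  qed (use assms in \<open>simp add: la_def\<close>)
qed

lemma la_pow4: assumes A: "A \<in> carrier_mat n n"
  shows "la (A ^\<^sub>m 4) v = la A (la A (la A (la A v)))"
proof -
  have "A ^\<^sub>m 4 = 1\<^sub>m n * A * A * A * A" using A by (simp add: numeral_eq_Suc)
  then show ?thesis using A
    by (simp add: la_mult[of _ n n _ n] la_one_la[OF A])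
qed

lemma la_vf: assumes "x \<in> carrier_vec (dim_col A)" shows "la A (vf x) = vf (A *\<^sub>v x)"
  using assms by (auto simp: la_def vf_def fun_eq_iff scalar_prod_def row_def intro!: sum.cong)

lemma char2_fun: "char2 TYPE('k::field) \<Longrightarrow> (v :: nat \<Rightarrow> 'k) + v = 0"
proof (rule ext)
  fix i assume c: "char2 TYPE('k)"
  have "(v + v) i = (1 + 1) * v i" by (simp add: distrib_right)
  then show "(v + v) i = 0 i" using c unfolding char2_def by simp
qed

definition mcar :: "'k::field urep \<Rightarrow> bool" where
  "mcar V \<longleftrightarrow> ra V \<in> carrier_mat (rdim V) (rdim V) \<and> rb V \<in> carrier_mat (rdim V) (rdim V) \<and> rc V \<in> carrier_mat (rdim V) (rdim V)"

lemma umod_mcar: "is_umod V \<Longrightarrow> mcar V"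
  unfolding is_umod_def mcar_def Let_def by auto

lemma urel_of: assumes U: "is_umod (X :: 'k::field urep)" and c: "char2 TYPE('k)"
  shows "urel (la (ra X)) (la (rb X)) (la (rc X))"
proof -
  let ?n = "rdim X"
  from U have A: "ra X \<in> carrier_mat ?n ?n" and B: "rb X \<in> carrier_mat ?n ?n" and C: "rc X \<in> carrier_mat ?n ?n"
    and ab: "ra X * rb X + rb X * ra X = rc X" and ac: "ra X * rc X + rc X * ra X = ra X"
    and bc: "rb X * rc X + rc X * rb X = rb X" and a4: "ra X ^\<^sub>m 4 = 0\<^sub>m ?n ?n"
    and b4: "rb X ^\<^sub>m 4 = 0\<^sub>m ?n ?n" and cc: "rc X * rc X + rc X = 0\<^sub>m ?n ?n"
    unfolding is_umod_def Let_def by auto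
  show ?thesis
  proof
    fix u v :: "nat \<Rightarrow> 'k"
    show "la (ra X) (u + v) = la (ra X) u + la (ra X) v" by (rule la_add)
    show "la (rb X) (u + v) = la (rb X) u + la (rb X) v" by (rule la_add)
    show "la (rc X) (u + v) = la (rc X) u + la (rc X) v" by (rule la_add)
    show "v + v = 0" using c by (rule char2_fun)
    have "la (ra X * rb X + rb X * ra X) v = la (rc X) v" using ab by simp
    then show "la (ra X) (la (rb X) v) + la (rb X) (la (ra X) v) = la (rc X) v"
      using A B by (simp add: la_addm[of _ ?n ?n] la_mult[of _ ?n ?n _ ?n])
    have "la (ra X * rc X + rc X * ra X) v = la (ra X) v" using ac by simp
    then show "la (ra X) (la (rc X) v) + la (rc X) (la (ra X) v) = la (ra X) v"
      using A C by (simp add: la_addm[of _ ?n ?n] la_mult[of _ ?n ?n _ ?n])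
    have "la (rb X * rc X + rc X * rb X) v = la (rb X) v" using bc by simp
    then show "la (rb X) (la (rc X) v) + la (rc X) (la (rb X) v) = la (rb X) v"
      using B C by (simp add: la_addm[of _ ?n ?n] la_mult[of _ ?n ?n _ ?n])
    have "la (rc X * rc X + rc X) v = la (0\<^sub>m ?n ?n) v" using cc by simp
    then show "la (rc X) (la (rc X) v) + la (rc X) v = 0"
      using C by (simp add: la_addm[of _ ?n ?n] la_mult[of _ ?n ?n _ ?n] la_zero_mat)
    have "la (ra X ^\<^sub>m 4) v = la (0\<^sub>m ?n ?n) v" using a4 by simp
    then show "la (ra X) (la (ra X) (la (ra X) (la (ra X) v))) = 0"
      using A by (simp add: la_pow4 la_zero_mat)
    have "la (rb X ^\<^sub>m 4) v = la (0\<^sub>m ?n ?n) v" using b4 by simp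
    then show "la (rb X) (la (rb X) (la (rb X) (la (rb X) v))) = 0"
      using B by (simp add: la_pow4 la_zero_mat)
  qed
qed


definition Qr :: "'k::field urep" where
  "Qr = \<lparr>rdim = 16, ra = bmat 16 16 QA, rb = bmat 16 16 QB, rc = bmat 16 16 QC\<rparr>"

lemma Qr_simps[simp]: "rdim Qr = 16" "ra Qr = bmat 16 16 QA" "rb Qr = bmat 16 16 QB" "rc Qr = bmat 16 16 QC"
  unfolding Qr_def by simp_all

lemma mcar_Qr: "mcar Qr" unfolding mcar_def by simp

lemma QABC_ok: "bok 16 QA" "bok 16 QB" "bok 16 QC" "length QA = 16" "length QB = 16" "length QC = 16"
  by code_simp+

definition hmat :: "'k::field urep \<Rightarrow> 'k vec \<Rightarrow> 'k mat" where
  "hmat X x = mat (rdim X) 16 (\<lambda>(i, j). (Wsg (la (ra X)) (la (rb X)) (vf x) ! j) i)"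

lemma sum_list_fun_apply: "sum_list (map (fs :: nat \<Rightarrow> nat \<Rightarrow> 'k::field) L) i = sum_list (map (\<lambda>l. fs l i) L)"
  by (induction L) auto

lemma mult_bmat_entry: assumes F: "F \<in> carrier_mat n m" and ok: "bok m I" and len: "length I = p"
  and i: "i < n" and j: "j < p"
  shows "(F * (bmat m p I :: 'k::field mat)) $$ (i, j) = sum_list (map (\<lambda>l. F $$ (i, l)) (I ! j))"
proof -
  have "I ! j \<in> set I" using j len by simp
  then have J: "distinct (I ! j)" "set (I ! j) \<subseteq> {0..<m}" using ok unfolding bok_def by auto
  have "(F * (bmat m p I :: 'k mat)) $$ (i, j) = (\<Sum>l\<in>{0..<m}. F $$ (i, l) * (if l \<in> set (I ! j) then 1 else 0))"
    using F i j by (simp add: scalar_prod_def)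
  also have "\<dots> = (\<Sum>l\<in>{0..<m}. if l \<in> set (I ! j) then F $$ (i, l) else 0)"
    by (rule sum.cong) auto
  also have "\<dots> = (\<Sum>l\<in>{0..<m} \<inter> set (I ! j). F $$ (i, l))"
    by (simp add: sum.inter_restrict)
  also have "{0..<m} \<inter> set (I ! j) = set (I ! j)" using J by auto
  also have "(\<Sum>l\<in>set (I ! j). F $$ (i, l)) = sum_list (map (\<lambda>l. F $$ (i, l)) (I ! j))"
    using J by (simp add: sum_list_distinct_conv_sum_set)
  finally show ?thesis .
qed

lemma hom_gen:
  assumes Mx: "Mx \<in> carrier_mat n n" and ok: "bok 16 I" and len: "length I = 16"
    and W: "\<And>j. j < 16 \<Longrightarrow> la Mx (Wf j) = sum_list (map Wf (I ! j))"
    and F: "F = mat n 16 (\<lambda>(i, j). Wf j i)"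
  shows "F * (bmat 16 16 I :: 'k::field mat) = Mx * F"
proof (rule eq_matI)
  have Fc: "F \<in> carrier_mat n 16" using F by simp
  fix i j assume "i < dim_row (Mx * F)" "j < dim_col (Mx * F)"
  then have i: "i < n" and j: "j < 16" using Mx F by auto
  have "I ! j \<in> set I" using j len by simp
  then have sub: "set (I ! j) \<subseteq> {0..<16}" using ok unfolding bok_def by auto
  have "(F * (bmat 16 16 I :: 'k mat)) $$ (i, j) = sum_list (map (\<lambda>l. F $$ (i, l)) (I ! j))"
    by (rule mult_bmat_entry[OF Fc ok len i j])
  also have "\<dots> = sum_list (map (\<lambda>l. Wf l i) (I ! j))"
    using sub i F by (intro arg_cong[where f = sum_list] map_cong) auto
  also have "\<dots> = la Mx (Wf j) i" using W[OF j] by (simp add: sum_list_fun_apply)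
  also have "\<dots> = (Mx * F) $$ (i, j)"
    using Mx F i j by (simp add: la_def scalar_prod_def)
  finally show "(F * (bmat 16 16 I :: 'k mat)) $$ (i, j) = (Mx * F) $$ (i, j)" .
qed (use Mx F in auto)

lemma hmat_hom: assumes U: "is_umod (X :: 'k::field urep)" and c: "char2 TYPE('k)"
  and x: "x \<in> carrier_vec (rdim X)" and Cx: "rc X *\<^sub>v x = 0\<^sub>v (rdim X)"
  shows "is_hom Qr X (hmat X x)"
proof -
  interpret urel "la (ra X)" "la (rb X)" "la (rc X)" by (rule urel_of[OF U c])
  have car: "mcar X" using U by (rule umod_mcar)
  then have A: "ra X \<in> carrier_mat (rdim X) (rdim X)" and B: "rb X \<in> carrier_mat (rdim X) (rdim X)"
    and C: "rc X \<in> carrier_mat (rdim X) (rdim X)" unfolding mcar_def by auto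
  have cf: "la (rc X) (vf x) = 0"
    using la_vf[of x "rc X"] C x Cx by (auto simp: vf_def fun_eq_iff)
  let ?W = "\<lambda>j. Wsg (la (ra X)) (la (rb X)) (vf x) ! j"
  have F: "hmat X x = mat (rdim X) 16 (\<lambda>(i, j). ?W j i)" unfolding hmat_def by simp
  show ?thesis unfolding is_hom_def
  proof (intro conjI)
    show "hmat X x \<in> carrier_mat (rdim X) (rdim Qr)" by (simp add: hmat_def)
    show "hmat X x * ra Qr = ra X * hmat X x"
      using hom_gen[OF A QABC_ok(1) QABC_ok(4) _ F] Ws_A cf by simp
    show "hmat X x * rb Qr = rb X * hmat X x"
      using hom_gen[OF B QABC_ok(2) QABC_ok(5) _ F] Ws_B cf by simp
    show "hmat X x * rc Qr = rc X * hmat X x"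
      using hom_gen[OF C QABC_ok(3) QABC_ok(6) _ F] Ws_C cf by simp
  qed
qed

lemma hmat_col0: assumes x: "x \<in> carrier_vec (rdim X)" shows "col (hmat X x) 0 = x"
  using x by (intro eq_vecI) (auto simp: hmat_def Wsg_def vf_def)


definition dl :: "nat \<Rightarrow> nat \<Rightarrow> 'k::field" where
  "dl j = (\<lambda>l. if l < 16 \<and> l = j then 1 else 0)"

lemma la_bmat_dl: assumes "l < 16" "length (I ! l) = 1" "hd (I ! l) < 16"
  shows "la (bmat 16 16 I) (dl l) = (dl (hd (I ! l)) :: nat \<Rightarrow> 'k::field)"
proof -
  obtain r where r: "I ! l = [r]" using assms(2) by (cases "I ! l") auto
  show ?thesis
  proof (rule ext)
    fix i
    show "la (bmat 16 16 I) (dl l) i = (dl (hd (I ! l)) :: nat \<Rightarrow> 'k) i"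
    proof (cases "i < 16")
      case True
      have "la (bmat 16 16 I) (dl l) i = (\<Sum>j\<in>{0..<16}. (if i \<in> set (I ! j) then 1 else 0) * (dl l j :: 'k))"
        using True by (simp add: la_def)
      also have "\<dots> = (\<Sum>j\<in>{0..<16}. if j = l then (if i \<in> set (I ! l) then 1 else 0) else 0)"
        by (rule sum.cong) (auto simp: dl_def)
      also have "\<dots> = (if i \<in> set (I ! l) then 1 else 0)" using assms(1) by simp
      finally show ?thesis using True r assms(3) by (simp add: dl_def)
    qed (simp add: la_def dl_def)
  qed
qed

lemma Ws_Q_dl: "Wsg (la (bmat 16 16 QA)) (la (bmat 16 16 QB)) (dl 0) =
   [dl 0, dl 1, dl 2, dl 3, dl 4, dl 5, dl 6, dl 7, dl 8, dl 9, dl 10, dl 11, dl 12, dl 13, dl 14, (dl 15 :: nat \<Rightarrow> 'k::field)]"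
  by (simp add: Wsg_def la_bmat_dl QA_def QB_def)

lemma Ws_Q_dl_nth: "j < 16 \<Longrightarrow> Wsg (la (bmat 16 16 QA)) (la (bmat 16 16 QB)) (dl 0) ! j = (dl j :: nat \<Rightarrow> 'k::field)"
  unfolding Ws_Q_dl by (drule less16) auto

lemma la_dl_entry: assumes G: "G \<in> carrier_mat n 16" and i: "i < n" and j: "j < 16"
  shows "la G (dl j) i = G $$ (i, j)"
proof -
  have "la G (dl j) i = (\<Sum>l\<in>{0..<16}. G $$ (i, l) * dl j l)" using G i by (simp add: la_def)
  also have "\<dots> = (\<Sum>l\<in>{0..<16}. if l = j then G $$ (i, j) else 0)"
    by (rule sum.cong) (auto simp: dl_def)
  also have "\<dots> = G $$ (i, j)" using j by simp
  finally show ?thesis .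
qed

lemma hom_la_comm: assumes "is_hom V W F" "M1 = ra V \<and> M2 = ra W \<or> M1 = rb V \<and> M2 = rb W \<or> M1 = rc V \<and> M2 = rc W"
  "mcar V" "mcar W"
  shows "la M2 (la F v) = la F (la M1 v)"
proof -
  have F: "F \<in> carrier_mat (rdim W) (rdim V)" using assms(1) unfolding is_hom_def by auto
  have eq: "F * M1 = M2 * F" and M1: "M1 \<in> carrier_mat (rdim V) (rdim V)" and M2: "M2 \<in> carrier_mat (rdim W) (rdim W)"
    using assms unfolding is_hom_def mcar_def by auto
  have "la (F * M1) v = la (M2 * F) v" using eq by simp
  then show ?thesis using la_mult[OF F M1] la_mult[OF M2 F] by simp
qed

lemma hmat_unique: assumes Y: "mcar Y" and G: "is_hom Qr Y G"
  shows "G = hmat Y (col G 0)"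
proof -
  let ?n = "rdim Y"
  have Gc: "G \<in> carrier_mat ?n 16" using G unfolding is_hom_def by simp
  have cA: "la (ra Y) (la G v) = la G (la (bmat 16 16 QA) v)" for v
    using hom_la_comm[OF G _ mcar_Qr Y] by simp
  have cB: "la (rb Y) (la G v) = la G (la (bmat 16 16 QB) v)" for v
    using hom_la_comm[OF G _ mcar_Qr Y] by simp
  have v0: "vf (col G 0) = la G (dl 0)"
  proof (rule ext)
    fix i show "vf (col G 0) i = la G (dl 0) i"
      using Gc la_dl_entry[OF Gc, of i 0] by (auto simp: vf_def la_def)
  qed
  have WY: "Wsg (la (ra Y)) (la (rb Y)) (la G (dl 0)) = map (la G) (Wsg (la (bmat 16 16 QA)) (la (bmat 16 16 QB)) (dl 0))"
    by (simp add: Wsg_def cA cB)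
  show ?thesis
  proof (rule eq_matI)
    fix i j assume "i < dim_row (hmat Y (col G 0))" "j < dim_col (hmat Y (col G 0))"
    then have i: "i < ?n" and j: "j < 16" by (auto simp: hmat_def)
    have "hmat Y (col G 0) $$ (i, j) = (Wsg (la (ra Y)) (la (rb Y)) (la G (dl 0)) ! j) i"
      using i j by (simp add: hmat_def v0)
    also have "\<dots> = la G (dl j) i" using j by (simp add: WY Ws_Q_dl_nth del: Ws_Q_dl)
    also have "\<dots> = G $$ (i, j)" by (rule la_dl_entry[OF Gc i j])
    finally show "G $$ (i, j) = hmat Y (col G 0) $$ (i, j)" by simp
  qed (use Gc in \<open>auto simp: hmat_def\<close>)
qed


lemma hom_comp: assumes "mcar U" "mcar V" "mcar W" "is_hom V W F" "is_hom U V G"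
  shows "is_hom U W (F * G)"
proof -
  have F: "F \<in> carrier_mat (rdim W) (rdim V)" and G: "G \<in> carrier_mat (rdim V) (rdim U)"
    using assms unfolding is_hom_def by auto
  have gen: "F * G * MU = MW * (F * G)"
    if MU: "MU \<in> carrier_mat (rdim U) (rdim U)" and MV: "MV \<in> carrier_mat (rdim V) (rdim V)"
     and MW: "MW \<in> carrier_mat (rdim W) (rdim W)" and e1: "F * MV = MW * F" and e2: "G * MU = MV * G"
     for MU MV MW
  proof -
    have "F * G * MU = F * (G * MU)" using F G MU by (rule assoc_mult_mat)
    also have "\<dots> = F * (MV * G)" using e2 by simp
    also have "\<dots> = (F * MV) * G" using F MV G by (rule assoc_mult_mat[symmetric])
    also have "\<dots> = (MW * F) * G" using e1 by simp
    also have "\<dots> = MW * (F * G)" using MW F G by (rule assoc_mult_mat)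
    finally show ?thesis .
  qed
  show ?thesis unfolding is_hom_def
    using F G assms gen[of "ra U" "ra V" "ra W"] gen[of "rb U" "rb V" "rb W"] gen[of "rc U" "rc V" "rc W"]
    unfolding mcar_def is_hom_def by auto
qed

lemma char2_neg: assumes "char2 TYPE('k::field)" shows "- (x::'k) = x"
proof -
  have "x + x = (1 + 1) * x" by (simp only: distrib_right mult_1_left)
  also have "\<dots> = 0" using assms unfolding char2_def by (simp only: mult_zero_left)
  finally have "x + x = 0" .
  then show ?thesis using add_eq_0_iff[of x x] by simp
qed

lemma char2_add: "char2 TYPE('k::field) \<Longrightarrow> (x::'k) + x = 0"
  using char2_neg[of x] by (metis add_eq_0_iff)

lemma char2_vec: assumes c: "char2 TYPE('k::field)" and v: "v \<in> carrier_vec n"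
  shows "v + v = (0\<^sub>v n :: 'k vec)"
  using v char2_add[OF c] by (intro eq_vecI) auto

lemma umod_cc: assumes U: "is_umod (X :: 'k::field urep)" and c: "char2 TYPE('k)"
  shows "rc X * rc X = rc X"
proof -
  let ?n = "rdim X"
  from U have C: "rc X \<in> carrier_mat ?n ?n" and cc: "rc X * rc X + rc X = 0\<^sub>m ?n ?n"
    unfolding is_umod_def Let_def by auto
  show ?thesis
  proof (rule eq_matI)
    fix i j assume ij: "i < dim_row (rc X)" "j < dim_col (rc X)"
    have "(rc X * rc X + rc X) $$ (i, j) = 0" using cc ij C by simp
    then have "(rc X * rc X) $$ (i, j) + rc X $$ (i, j) = 0" using ij C by simp
    then have "(rc X * rc X) $$ (i, j) = - rc X $$ (i, j)" by (simp add: eq_neg_iff_add_eq_0)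
    then show "(rc X * rc X) $$ (i, j) = rc X $$ (i, j)" using char2_neg[OF c] by simp
  qed (use C in auto)
qed

lemma col_QC0: "col (bmat 16 16 QC) 0 = (0\<^sub>v 16 :: 'k::field vec)"
  by (rule eq_vecI) (auto simp: QC_def)

lemma mult_zero_vec: "A \<in> carrier_mat n m \<Longrightarrow> A *\<^sub>v 0\<^sub>v m = (0\<^sub>v n :: 'k::field vec)"
  by (intro eq_vecI) (auto simp: scalar_prod_def)

lemma summand_proj: assumes c: "char2 TYPE('k::field)" and P: "is_umod (P :: 'k urep)"
  and s: "is_hom P Qr s" and t: "is_hom Qr P t" and ts: "t * s = 1\<^sub>m (rdim P)"
  shows "is_projective P"
  unfolding is_projective_def
proof (intro conjI allI impI)
  show "is_umod P" by (rule P)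
  fix X Y f g
  assume a: "is_umod X \<and> is_umod Y \<and> is_hom X Y f \<and> hom_surj X Y f \<and> is_hom P Y g"
  then have X: "is_umod X" and Y: "is_umod Y" and f: "is_hom X Y f" and fs: "hom_surj X Y f" and g: "is_hom P Y g" by auto
  have mX: "mcar X" and mY: "mcar Y" and mP: "mcar P" using X Y P by (auto intro: umod_mcar)
  have fc: "f \<in> carrier_mat (rdim Y) (rdim X)" using f unfolding is_hom_def by auto
  have gc: "g \<in> carrier_mat (rdim Y) (rdim P)" using g unfolding is_hom_def by auto
  have sc: "s \<in> carrier_mat 16 (rdim P)" using s unfolding is_hom_def by auto
  have tc: "t \<in> carrier_mat (rdim P) 16" using t unfolding is_hom_def by auto
  have CX: "rc X \<in> carrier_mat (rdim X) (rdim X)" and CY: "rc Y \<in> carrier_mat (rdim Y) (rdim Y)"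
    using mX mY unfolding mcar_def by auto
  define G where "G = g * t"
  have G: "is_hom Qr Y G" unfolding G_def by (rule hom_comp[OF mcar_Qr mP mY g t])
  have Gc: "G \<in> carrier_mat (rdim Y) 16" using G unfolding is_hom_def by auto
  define y where "y = col G 0"
  have y: "y \<in> carrier_vec (rdim Y)" unfolding y_def using col_dim[of G 0] carrier_matD(1)[OF Gc] by simp
  obtain x0 where x0: "x0 \<in> carrier_vec (rdim X)" and fx0: "f *\<^sub>v x0 = y"
    using fs y unfolding hom_surj_def by blast
  define x where "x = x0 + rc X *\<^sub>v x0"
  have x: "x \<in> carrier_vec (rdim X)" using x0 CX unfolding x_def by auto
  have "rc X *\<^sub>v x = rc X *\<^sub>v x0 + (rc X * rc X) *\<^sub>v x0"
    unfolding x_def using CX x0 by (simp add: mult_add_distrib_mat_vec)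
  also have "\<dots> = 0\<^sub>v (rdim X)" using umod_cc[OF X c] char2_vec[OF c, of "rc X *\<^sub>v x0" "rdim X"] CX x0 by simp
  finally have Cx: "rc X *\<^sub>v x = 0\<^sub>v (rdim X)" .
  have CYy: "rc Y *\<^sub>v y = 0\<^sub>v (rdim Y)"
  proof -
    have "rc Y *\<^sub>v y = col (rc Y * G) 0" unfolding y_def using CY Gc by simp
    also have "rc Y * G = G * rc Qr" using G unfolding is_hom_def by simp
    also have "col (G * rc Qr) 0 = G *\<^sub>v col (bmat 16 16 QC) 0" using col_mult2[OF Gc bmat_carrier[of 16 16 QC], of 0] by simp
    also have "\<dots> = 0\<^sub>v (rdim Y)" using Gc by (simp add: col_QC0 mult_zero_vec)
    finally show ?thesis .
  qed
  have fx: "f *\<^sub>v x = y"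
  proof -
    have "f *\<^sub>v x = f *\<^sub>v x0 + (f * rc X) *\<^sub>v x0"
      unfolding x_def using fc CX x0 by (simp add: mult_add_distrib_mat_vec)
    also have "f * rc X = rc Y * f" using f unfolding is_hom_def by simp
    also have "(rc Y * f) *\<^sub>v x0 = rc Y *\<^sub>v y" using CY fc x0 fx0 by simp
    finally show ?thesis using fx0 CYy y by simp
  qed
  define h where "h = hmat X x"
  have h: "is_hom Qr X h" unfolding h_def by (rule hmat_hom[OF X c x Cx])
  have hc: "h \<in> carrier_mat (rdim X) 16" using h unfolding is_hom_def by auto
  have fh: "is_hom Qr Y (f * h)" by (rule hom_comp[OF mcar_Qr mX mY f h])
  have "f * h = hmat Y (col (f * h) 0)" by (rule hmat_unique[OF mY fh])
  also have "col (f * h) 0 = y" using fc hc fx hmat_col0[OF x] unfolding h_def by simp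
  also have "hmat Y y = G" unfolding y_def by (rule hmat_unique[OF mY G, symmetric])
  finally have fhG: "f * h = G" .
  show "\<exists>h. is_hom P X h \<and> f * h = g"
  proof (intro exI conjI)
    show "is_hom P X (h * s)" by (rule hom_comp[OF mP mcar_Qr mX h s])
    have "f * (h * s) = (f * h) * s" using fc hc sc by (rule assoc_mult_mat[symmetric])
    also have "\<dots> = (g * t) * s" using fhG unfolding G_def by simp
    also have "\<dots> = g * (t * s)" using gc tc sc by (rule assoc_mult_mat)
    also have "\<dots> = g" using ts gc by simp
    finally show "f * (h * s) = g" .
  qed
qed

lemma mult_vec_sum: assumes "F \<in> carrier_mat m n" "x \<in> carrier_vec n" "i < m"
  shows "(F *\<^sub>v x) $ i = (\<Sum>j\<in>{0..<n}. F $$ (i, j) * x $ j)"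
  using assms by (simp add: scalar_prod_def)

lemma inj_left_inv:
  fixes F :: "'k::field mat"
  assumes "F \<in> carrier_mat m n" "\<And>x. x \<in> carrier_vec n \<Longrightarrow> F *\<^sub>v x = 0\<^sub>v m \<Longrightarrow> x = 0\<^sub>v n"
  shows "\<exists>G. G \<in> carrier_mat n m \<and> G * F = 1\<^sub>m n"
  using assms
proof (induction n arbitrary: F)
  case 0
  then show ?case by (intro exI[of _ "0\<^sub>m 0 m"]) (auto intro!: eq_matI)
next
  case (Suc n F)
  have Fc: "F \<in> carrier_mat m (Suc n)" by fact
  define F' where "F' = mat m n (\<lambda>(i, j). F $$ (i, j))"
  have F'c: "F' \<in> carrier_mat m n" unfolding F'_def by simp
  have F'e: "i < m \<Longrightarrow> j < n \<Longrightarrow> F' $$ (i, j) = F $$ (i, j)" for i j unfolding F'_def by simp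
  have inj': "x = 0\<^sub>v n" if x: "x \<in> carrier_vec n" and Fx: "F' *\<^sub>v x = 0\<^sub>v m" for x
  proof -
    define x' where "x' = vec (Suc n) (\<lambda>j. if j < n then x $ j else 0)"
    have x'c: "x' \<in> carrier_vec (Suc n)" unfolding x'_def by simp
    have "F *\<^sub>v x' = 0\<^sub>v m"
    proof (rule eq_vecI)
      fix i assume "i < dim_vec (0\<^sub>v m :: 'k vec)"
      then have i: "i < m" by simp
      have "(F *\<^sub>v x') $ i = (\<Sum>j\<in>{0..<Suc n}. F $$ (i, j) * x' $ j)" by (rule mult_vec_sum[OF Fc x'c i])
      also have "\<dots> = (\<Sum>j\<in>{0..<n}. F $$ (i, j) * x' $ j)" by (simp add: x'_def)
      also have "\<dots> = (\<Sum>j\<in>{0..<n}. F' $$ (i, j) * x $ j)" by (rule sum.cong) (auto simp: x'_def F'e i)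
      also have "\<dots> = (F' *\<^sub>v x) $ i" by (rule mult_vec_sum[OF F'c x i, symmetric])
      finally show "(F *\<^sub>v x') $ i = (0\<^sub>v m :: 'k vec) $ i" using Fx i by simp
    qed (use Fc in simp)
    then have "x' = 0\<^sub>v (Suc n)" using Suc.prems(2) x'c by blast
    then have "x' $ j = 0" if "j < n" for j using that by simp
    then show ?thesis using x by (intro eq_vecI) (auto simp: x'_def)
  qed
  obtain G' where G'c: "G' \<in> carrier_mat n m" and G'F': "G' * F' = 1\<^sub>m n"
    using Suc.IH[OF F'c inj'] by blast
  define u where "u = col F n"
  have uc: "u \<in> carrier_vec m" unfolding u_def by (rule col_carrier_vec[OF _ Fc]) simp
  define gu where "gu = G' *\<^sub>v u"
  have guc: "gu \<in> carrier_vec n" unfolding gu_def using G'c uc by simp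
  define u' where "u' = u - F' *\<^sub>v gu"
  have u'c: "u' \<in> carrier_vec m" unfolding u'_def using uc F'c guc by simp
  have u'nz: "u' \<noteq> 0\<^sub>v m"
  proof
    assume u'0: "u' = 0\<^sub>v m"
    define w where "w = vec (Suc n) (\<lambda>j. if j < n then - gu $ j else 1)"
    have wc: "w \<in> carrier_vec (Suc n)" unfolding w_def by simp
    have "F *\<^sub>v w = 0\<^sub>v m"
    proof (rule eq_vecI)
      fix i assume "i < dim_vec (0\<^sub>v m :: 'k vec)"
      then have i: "i < m" by simp
      have "(F *\<^sub>v w) $ i = (\<Sum>j\<in>{0..<Suc n}. F $$ (i, j) * w $ j)" by (rule mult_vec_sum[OF Fc wc i])
      also have "\<dots> = (\<Sum>j\<in>{0..<n}. F $$ (i, j) * w $ j) + F $$ (i, n)" by (simp add: w_def)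
      also have "(\<Sum>j\<in>{0..<n}. F $$ (i, j) * w $ j) = - (\<Sum>j\<in>{0..<n}. F' $$ (i, j) * gu $ j)"
        by (simp add: sum_negf[symmetric] w_def F'e i)
      also have "(\<Sum>j\<in>{0..<n}. F' $$ (i, j) * gu $ j) = (F' *\<^sub>v gu) $ i" by (rule mult_vec_sum[OF F'c guc i, symmetric])
      also have "F $$ (i, n) = u $ i" unfolding u_def using Fc i by simp
      also have "- (F' *\<^sub>v gu) $ i + u $ i = u' $ i" unfolding u'_def using i F'c guc uc by simp
      finally show "(F *\<^sub>v w) $ i = (0\<^sub>v m :: 'k vec) $ i" using u'0 i by simp
    qed (use Fc in simp)
    then have "w = 0\<^sub>v (Suc n)" using Suc.prems(2) wc by blast
    then have "w $ n = 0" by simp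
    then show False by (simp add: w_def)
  qed
  obtain k where k: "k < m" and uk: "u' $ k \<noteq> 0"
  proof -
    have "\<exists>k<m. u' $ k \<noteq> 0"
    proof (rule ccontr)
      assume "\<not> ?thesis"
      then have "u' = 0\<^sub>v m" using u'c by (intro eq_vecI) auto
      with u'nz show False by simp
    qed
    then show ?thesis using that by blast
  qed
  define r where "r = vec m (\<lambda>j. if j = k then 1 / u' $ k else (0::'k))"
  have rc: "r \<in> carrier_vec m" unfolding r_def by simp
  have ru': "r \<bullet> u' = 1"
  proof -
    have "r \<bullet> u' = (\<Sum>j\<in>{0..<m}. r $ j * u' $ j)" using u'c by (simp add: scalar_prod_def)
    also have "\<dots> = (\<Sum>j\<in>{0..<m}. if j = k then 1 else 0)"
      by (rule sum.cong) (auto simp: r_def uk)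
    also have "\<dots> = 1" using k by simp
    finally show ?thesis .
  qed
  define al where "al = transpose_mat F' *\<^sub>v r"
  have alc: "al \<in> carrier_vec n" unfolding al_def using F'c rc by simp
  define r' where "r' = r - transpose_mat G' *\<^sub>v al"
  have r'c: "r' \<in> carrier_vec m" unfolding r'_def using rc G'c alc by simp
  have K1: "transpose_mat F' *\<^sub>v r' = 0\<^sub>v n"
  proof -
    have tF: "transpose_mat F' \<in> carrier_mat n m" and tG: "transpose_mat G' \<in> carrier_mat m n" using F'c G'c by auto
    have "transpose_mat F' *\<^sub>v r' = al - transpose_mat F' *\<^sub>v (transpose_mat G' *\<^sub>v al)"
      unfolding r'_def al_def using tF tG rc alc by (simp add: mult_minus_distrib_mat_vec[OF tF])
    also have "transpose_mat F' *\<^sub>v (transpose_mat G' *\<^sub>v al) = (transpose_mat F' * transpose_mat G') *\<^sub>v al"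
      using tF tG alc by simp
    also have "transpose_mat F' * transpose_mat G' = transpose_mat (G' * F')"
      using transpose_mult[OF G'c F'c] by simp
    also have "\<dots> = 1\<^sub>m n" using G'F' by simp
    finally show ?thesis using alc by simp
  qed
  have K2: "r' \<bullet> u = 1"
  proof -
    have tG: "transpose_mat G' \<in> carrier_mat m n" using G'c by auto
    have "r' \<bullet> u = r \<bullet> u - (transpose_mat G' *\<^sub>v al) \<bullet> u"
      unfolding r'_def using rc tG alc uc by (simp add: minus_scalar_prod_distrib)
    also have "(transpose_mat G' *\<^sub>v al) \<bullet> u = al \<bullet> gu"
      unfolding gu_def by (rule transpose_vec_mult_scalar[OF G'c uc alc])
    also have "al \<bullet> gu = r \<bullet> (F' *\<^sub>v gu)"
      unfolding al_def by (rule transpose_vec_mult_scalar[OF F'c guc rc])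
    also have "r \<bullet> u - r \<bullet> (F' *\<^sub>v gu) = r \<bullet> u'"
      unfolding u'_def using rc uc F'c guc by (simp add: scalar_prod_minus_distrib)
    finally show ?thesis using ru' by simp
  qed
  have K1e: "r' \<bullet> col F l = 0" if l: "l < n" for l
  proof -
    have "col F l = col F' l" using l Fc by (intro eq_vecI) (auto simp: F'e F'_def)
    moreover have "(transpose_mat F' *\<^sub>v r') $ l = col F' l \<bullet> r'" using l F'c by simp
    moreover have "col F' l \<bullet> r' = r' \<bullet> col F' l" using l F'c r'c by (intro comm_scalar_prod) auto
    ultimately show ?thesis using K1 l by simp
  qed
  have GFe: "row G' i \<bullet> col F l = (if i = l then 1 else 0)" if i: "i < n" and l: "l < n" for i l
  proof -
    have "col F l = col F' l" using l Fc by (intro eq_vecI) (auto simp: F'e F'_def)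
    then have "row G' i \<bullet> col F l = (G' * F') $$ (i, l)" using i l G'c F'c by simp
    then show ?thesis using G'F' i l by simp
  qed
  have Gu: "row G' i \<bullet> u = gu $ i" if i: "i < n" for i
    unfolding gu_def using i G'c by simp
  define G where "G = mat (Suc n) m (\<lambda>(i, j). if i < n then G' $$ (i, j) - gu $ i * r' $ j else r' $ j)"
  have Gc: "G \<in> carrier_mat (Suc n) m" unfolding G_def by simp
  have rowG1: "row G i = row G' i - gu $ i \<cdot>\<^sub>v r'" if i: "i < n" for i
    using i G'c r'c by (intro eq_vecI) (auto simp: G_def)
  have rowG2: "row G n = r'" using r'c by (intro eq_vecI) (auto simp: G_def)
  have "G * F = 1\<^sub>m (Suc n)"
  proof (rule eq_matI)
    fix i l assume "i < dim_row (1\<^sub>m (Suc n) :: 'k mat)" "l < dim_col (1\<^sub>m (Suc n) :: 'k mat)"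
    then have i: "i < Suc n" and l: "l < Suc n" by auto
    have colc: "col F l \<in> carrier_vec m" by (rule col_carrier_vec[OF l Fc])
    have e: "(G * F) $$ (i, l) = row G i \<bullet> col F l" using i l Gc Fc by simp
    show "(G * F) $$ (i, l) = (1\<^sub>m (Suc n) :: 'k mat) $$ (i, l)"
    proof (cases "i < n")
      case True
      have rG'c: "row G' i \<in> carrier_vec m" using True G'c by simp
      have "row G i \<bullet> col F l = row G' i \<bullet> col F l - gu $ i * (r' \<bullet> col F l)"
        unfolding rowG1[OF True] using rG'c r'c colc by (simp add: minus_scalar_prod_distrib)
      also have "\<dots> = (if i = l then 1 else 0)"
      proof (cases "l < n")
        case True
        then show ?thesis using GFe[OF \<open>i < n\<close> True] K1e[OF True] by simp
      next
        case False
        then have ln: "l = n" using l by simp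
        then have "col F l = u" unfolding u_def by simp
        then show ?thesis using Gu[OF \<open>i < n\<close>] K2 ln \<open>i < n\<close> by simp
      qed
      finally show ?thesis using e i l by simp
    next
      case False
      then have inn: "i = n" using i by simp
      have "row G i \<bullet> col F l = r' \<bullet> col F l" using inn rowG2 by simp
      also have "\<dots> = (if i = l then 1 else 0)"
      proof (cases "l < n")
        case True
        then show ?thesis using K1e[OF True] inn by simp
      next
        case False
        then have ln: "l = n" using l by simp
        then show ?thesis using K2 inn unfolding u_def by simp
      qed
      finally show ?thesis using e i l by simp
    qed
  qed (use Gc Fc in auto)
  then show ?case using Gc by blast
qed


definition tr :: "'k::field urep \<Rightarrow> 'k urep" where
  "tr V = \<lparr>rdim = rdim V, ra = transpose_mat (ra V), rb = transpose_mat (rb V), rc = transpose_mat (rc V)\<rparr>"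

lemma tr_simps[simp]: "rdim (tr V) = rdim V" "ra (tr V) = transpose_mat (ra V)"
  "rb (tr V) = transpose_mat (rb V)" "rc (tr V) = transpose_mat (rc V)"
  unfolding tr_def by simp_all

lemma tr_tr[simp]: "tr (tr V) = V"
  by (cases V) (simp add: tr_def)

lemma transpose_zero_mat: "transpose_mat (0\<^sub>m n m) = (0\<^sub>m m n :: 'k::field mat)"
  by (rule eq_matI) auto

lemma transpose_pow4: assumes A: "(A :: 'k::field mat) \<in> carrier_mat n n"
  shows "transpose_mat (A ^\<^sub>m 4) = transpose_mat A ^\<^sub>m 4"
proof -
  have tA: "transpose_mat A \<in> carrier_mat n n" using A by simp
  have AA: "A * A \<in> carrier_mat n n" using A by simp
  have AAA: "A * A * A \<in> carrier_mat n n" using A by simp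
  have "transpose_mat (A ^\<^sub>m 4) = transpose_mat (A * A * A * A)" using bmat_pow4[OF A] by simp
  also have "\<dots> = transpose_mat A * transpose_mat (A * A * A)" by (rule transpose_mult[OF AAA A])
  also have "transpose_mat (A * A * A) = transpose_mat A * transpose_mat (A * A)" by (rule transpose_mult[OF AA A])
  also have "transpose_mat (A * A) = transpose_mat A * transpose_mat A" by (rule transpose_mult[OF A A])
  also have "transpose_mat A * (transpose_mat A * (transpose_mat A * transpose_mat A)) =
     transpose_mat A * transpose_mat A * transpose_mat A * transpose_mat A"
    using tA by (simp add: assoc_mult_mat[of _ n n _ n _ n])
  also have "\<dots> = transpose_mat A ^\<^sub>m 4" using bmat_pow4[OF tA] by simp
  finally show ?thesis .
qed

lemma umod_tr: assumes U: "is_umod (V :: 'k::field urep)" shows "is_umod (tr V)"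
proof -
  let ?n = "rdim V"
  from U have A: "ra V \<in> carrier_mat ?n ?n" and B: "rb V \<in> carrier_mat ?n ?n" and C: "rc V \<in> carrier_mat ?n ?n"
    and ab: "ra V * rb V + rb V * ra V = rc V" and ac: "ra V * rc V + rc V * ra V = ra V"
    and bc: "rb V * rc V + rc V * rb V = rb V" and a4: "ra V ^\<^sub>m 4 = 0\<^sub>m ?n ?n"
    and b4: "rb V ^\<^sub>m 4 = 0\<^sub>m ?n ?n" and cc: "rc V * rc V + rc V = 0\<^sub>m ?n ?n"
    unfolding is_umod_def Let_def by auto
  have gen: "transpose_mat X * transpose_mat Y + transpose_mat Y * transpose_mat X = transpose_mat Z"
    if X: "(X :: 'k mat) \<in> carrier_mat ?n ?n" and Y: "Y \<in> carrier_mat ?n ?n" and e: "X * Y + Y * X = Z" for X Y Z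
  proof -
    have "transpose_mat X * transpose_mat Y + transpose_mat Y * transpose_mat X = transpose_mat (Y * X) + transpose_mat (X * Y)"
      using transpose_mult[OF X Y] transpose_mult[OF Y X] by simp
    also have "\<dots> = transpose_mat (Y * X + X * Y)" using transpose_add[of "Y * X" ?n ?n "X * Y"] X Y by simp
    also have "Y * X + X * Y = X * Y + Y * X" using X Y by (intro comm_add_mat) auto
    finally show ?thesis using e by simp
  qed
  have cc': "transpose_mat (rc V) * transpose_mat (rc V) + transpose_mat (rc V) = 0\<^sub>m ?n ?n"
  proof -
    have "transpose_mat (rc V) * transpose_mat (rc V) + transpose_mat (rc V) = transpose_mat (rc V * rc V + rc V)"
      using C transpose_mult[OF C C] transpose_add[of "rc V * rc V" ?n ?n "rc V"] by simp
    then show ?thesis using cc by (simp add: transpose_zero_mat)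
  qed
  have a4': "transpose_mat (ra V) ^\<^sub>m 4 = 0\<^sub>m ?n ?n"
    using transpose_pow4[OF A] a4 transpose_zero_mat[of ?n ?n] by simp
  have b4': "transpose_mat (rb V) ^\<^sub>m 4 = 0\<^sub>m ?n ?n"
    using transpose_pow4[OF B] b4 transpose_zero_mat[of ?n ?n] by simp
  show ?thesis unfolding is_umod_def Let_def tr_simps
    using A B C gen[OF A B ab] gen[OF A C ac] gen[OF B C bc] cc' a4' b4'
    by (simp only: transpose_carrier_mat simp_thms)
qed

lemma hom_tr: assumes h: "is_hom (V :: 'k::field urep) W F" and mV: "mcar V" and mW: "mcar W"
  shows "is_hom (tr W) (tr V) (transpose_mat F)"
proof -
  have F: "F \<in> carrier_mat (rdim W) (rdim V)" using h unfolding is_hom_def by auto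
  have gen: "transpose_mat F * transpose_mat MW = transpose_mat MV * transpose_mat F"
    if MV: "(MV :: 'k mat) \<in> carrier_mat (rdim V) (rdim V)" and MW: "MW \<in> carrier_mat (rdim W) (rdim W)"
      and e: "F * MV = MW * F" for MV MW
    using transpose_mult[OF MW F] transpose_mult[OF F MV] e by simp
  show ?thesis unfolding is_hom_def tr_simps using F h mV mW gen unfolding is_hom_def mcar_def by auto
qed

lemma inj_surj_tr: assumes F: "(F :: 'k::field mat) \<in> carrier_mat m n"
  and inj: "\<And>x. x \<in> carrier_vec n \<Longrightarrow> F *\<^sub>v x = 0\<^sub>v m \<Longrightarrow> x = 0\<^sub>v n"
  and y: "y \<in> carrier_vec n"
  shows "\<exists>z \<in> carrier_vec m. transpose_mat F *\<^sub>v z = y"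
proof -
  obtain G where G: "G \<in> carrier_mat n m" and GF: "G * F = 1\<^sub>m n" using inj_left_inv[OF F inj] by blast
  have tG: "transpose_mat G \<in> carrier_mat m n" and tF: "transpose_mat F \<in> carrier_mat n m" using G F by auto
  show ?thesis
  proof (intro bexI)
    show "transpose_mat G *\<^sub>v y \<in> carrier_vec m" using tG y by simp
    have "transpose_mat F *\<^sub>v (transpose_mat G *\<^sub>v y) = (transpose_mat F * transpose_mat G) *\<^sub>v y"
      using tF tG y by simp
    also have "transpose_mat F * transpose_mat G = transpose_mat (G * F)" using transpose_mult[OF G F] by simp
    finally show "transpose_mat F *\<^sub>v (transpose_mat G *\<^sub>v y) = y" using GF y by simp
  qed
qed

lemma proj_tr_inj: assumes P: "is_umod (P :: 'k::field urep)" and pr: "is_projective (tr P)"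
  shows "is_injective P"
  unfolding is_injective_def
proof (intro conjI allI impI)
  show "is_umod P" by (rule P)
  fix X Y f g
  assume a: "is_umod X \<and> is_umod Y \<and> is_hom X Y f \<and> hom_inj X Y f \<and> is_hom X P g"
  then have X: "is_umod X" and Y: "is_umod Y" and f: "is_hom X Y f" and fi: "hom_inj X Y f" and g: "is_hom X P g" by auto
  have mX: "mcar X" and mY: "mcar Y" and mP: "mcar P" using X Y P by (auto intro: umod_mcar)
  have mtP: "mcar (tr P)" and mtY: "mcar (tr Y)" using umod_tr[OF P] umod_tr[OF Y] by (auto intro: umod_mcar)
  have fc: "f \<in> carrier_mat (rdim Y) (rdim X)" using f unfolding is_hom_def by auto
  have gc: "g \<in> carrier_mat (rdim P) (rdim X)" using g unfolding is_hom_def by auto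
  have fs: "hom_surj (tr Y) (tr X) (transpose_mat f)"
    unfolding hom_surj_def tr_simps using inj_surj_tr[OF fc] fi unfolding hom_inj_def by blast
  obtain h' where h': "is_hom (tr P) (tr Y) h'" and fh': "transpose_mat f * h' = transpose_mat g"
    using pr umod_tr[OF X] umod_tr[OF Y] hom_tr[OF f mX mY] fs hom_tr[OF g mX mP]
    unfolding is_projective_def by blast
  have h'c: "h' \<in> carrier_mat (rdim Y) (rdim P)" using h' unfolding is_hom_def by auto
  show "\<exists>h. is_hom Y P h \<and> h * f = g"
  proof (intro exI conjI)
    show "is_hom Y P (transpose_mat h')" using hom_tr[OF h' mtP mtY] by simp
    have "transpose_mat h' * f = transpose_mat (transpose_mat f * h')"
      using transpose_mult[of "transpose_mat f" "rdim X" "rdim Y" h' "rdim P"] fc h'c by simp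
    then show "transpose_mat h' * f = g" using fh' by simp
  qed
qed

lemma sq_right_inv: assumes S: "(S :: 'k::field mat) \<in> carrier_mat n n" and T: "T \<in> carrier_mat n n"
  and ST: "S * T = 1\<^sub>m n" shows "T * S = 1\<^sub>m n"
  by (rule mat_mult_left_right_inverse[OF S T ST])

lemma sq_surj_inv: assumes S: "(S :: 'k::field mat) \<in> carrier_mat n n"
  and surj: "\<And>y. y \<in> carrier_vec n \<Longrightarrow> \<exists>x \<in> carrier_vec n. S *\<^sub>v x = y"
  shows "\<exists>T. T \<in> carrier_mat n n \<and> S * T = 1\<^sub>m n \<and> T * S = 1\<^sub>m n"
proof -
  have "\<forall>j. \<exists>x. j < n \<longrightarrow> x \<in> carrier_vec n \<and> S *\<^sub>v x = unit_vec n j"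
    using surj by (metis unit_vec_carrier)
  then obtain pre where pre: "\<And>j. j < n \<Longrightarrow> pre j \<in> carrier_vec n \<and> S *\<^sub>v pre j = unit_vec n j"
    by metis
  define T where "T = mat n n (\<lambda>(i, j). pre j $ i)"
  have Tc: "T \<in> carrier_mat n n" unfolding T_def by simp
  have colT: "col T j = pre j" if j: "j < n" for j
    using pre[OF j] j unfolding T_def by (intro eq_vecI) auto
  have ST: "S * T = 1\<^sub>m n"
  proof (rule eq_matI)
    fix i j assume "i < dim_row (1\<^sub>m n :: 'k mat)" "j < dim_col (1\<^sub>m n :: 'k mat)"
    then have i: "i < n" and j: "j < n" by auto
    have "(S * T) $$ (i, j) = (S *\<^sub>v col T j) $ i" using S Tc i j by simp
    also have "\<dots> = unit_vec n j $ i" using colT[OF j] pre[OF j] by simp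
    finally show "(S * T) $$ (i, j) = (1\<^sub>m n :: 'k mat) $$ (i, j)" using i j by simp
  qed (use S Tc in auto)
  show ?thesis using Tc ST sq_right_inv[OF S Tc ST] by blast
qed

lemma sq_inj_inv: assumes S: "(S :: 'k::field mat) \<in> carrier_mat n n"
  and inj: "\<And>x. x \<in> carrier_vec n \<Longrightarrow> S *\<^sub>v x = 0\<^sub>v n \<Longrightarrow> x = 0\<^sub>v n"
  shows "\<exists>T. T \<in> carrier_mat n n \<and> S * T = 1\<^sub>m n \<and> T * S = 1\<^sub>m n"
proof -
  obtain G where G: "G \<in> carrier_mat n n" and GS: "G * S = 1\<^sub>m n" using inj_left_inv[OF S inj] by blast
  show ?thesis using G GS sq_right_inv[OF G S GS] by blast
qed

lemma inv_hom: assumes S: "is_hom V V S" and mV: "mcar V" and T: "T \<in> carrier_mat (rdim V) (rdim V)"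
  and ST: "S * T = 1\<^sub>m (rdim V)" and TS: "T * S = 1\<^sub>m (rdim V)"
  shows "is_hom V V (T :: 'k::field mat)"
proof -
  let ?n = "rdim V"
  have Sc: "S \<in> carrier_mat ?n ?n" using S unfolding is_hom_def by auto
  have gen: "T * X = X * T" if X: "X \<in> carrier_mat ?n ?n" and e: "S * X = X * S" for X
  proof -
    have "T * X = T * X * (S * T)" using T X ST by simp
    also have "\<dots> = T * (X * S) * T" using T X Sc by (simp add: assoc_mult_mat[of _ ?n ?n _ ?n _ ?n])
    also have "\<dots> = T * (S * X) * T" using e by simp
    also have "\<dots> = (T * S) * (X * T)" using T X Sc by (simp add: assoc_mult_mat[of _ ?n ?n _ ?n _ ?n])
    also have "\<dots> = X * T" using TS X T by simp
    finally show ?thesis .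
  qed
  show ?thesis using T S mV gen unfolding is_hom_def mcar_def by auto
qed

lemma iso_from_invs: assumes h: "is_hom P W h" and k: "is_hom W P k" and mP: "mcar P" and mM: "mcar W"
  and u: "u \<in> carrier_mat (rdim W) (rdim W)" "h * k * u = 1\<^sub>m (rdim W)" "u * (h * k) = 1\<^sub>m (rdim W)"
  and v: "v \<in> carrier_mat (rdim P) (rdim P)" "k * h * v = 1\<^sub>m (rdim P)" "v * (k * h) = 1\<^sub>m (rdim P)"
  shows "umod_iso P (W :: 'k::field urep)"
proof -
  have hc: "h \<in> carrier_mat (rdim W) (rdim P)" and kc: "k \<in> carrier_mat (rdim P) (rdim W)"
    using h k unfolding is_hom_def by auto
  have hk: "is_hom W W (h * k)" by (rule hom_comp[OF mM mP mM h k])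
  have hkc: "h * k \<in> carrier_mat (rdim W) (rdim W)" using hc kc by simp
  have uh: "is_hom W W u" by (rule inv_hom[OF hk mM u(1) u(2) u(3)])
  have G: "is_hom W P (k * u)" by (rule hom_comp[OF mM mM mP k uh])
  have FG: "h * (k * u) = 1\<^sub>m (rdim W)" using hc kc u by simp
  have vc: "v * k \<in> carrier_mat (rdim P) (rdim W)" using v kc by simp
  have "v * k = v * k * (h * (k * u))" using FG right_mult_one_mat[OF vc] by simp
  also have "\<dots> = v * k * h * (k * u)" using vc hc kc u by (simp only: assoc_mult_mat[OF vc hc, of "k * u" "rdim W"] mult_carrier_mat)
  also have "v * k * h = v * (k * h)" by (rule assoc_mult_mat[OF v(1) kc hc])
  also have "\<dots> * (k * u) = k * u" using v kc u by simp
  finally have vk: "v * k = k * u" .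
  have GF: "k * u * h = 1\<^sub>m (rdim P)"
  proof -
    have "k * u * h = v * k * h" using vk by simp
    also have "\<dots> = v * (k * h)" using v kc hc by simp
    finally show ?thesis using v by simp
  qed
  show ?thesis unfolding umod_iso_def using h G GF FG by blast
qed

lemma image_submod: assumes S: "is_hom (V :: 'k::field urep) V S" and mV: "mcar V"
  shows "is_submod {S *\<^sub>v x | x. x \<in> carrier_vec (rdim V)} V"
proof -
  let ?n = "rdim V"
  have Sc: "S \<in> carrier_mat ?n ?n" using S unfolding is_hom_def by auto
  have mats: "ra V \<in> carrier_mat ?n ?n" "rb V \<in> carrier_mat ?n ?n" "rc V \<in> carrier_mat ?n ?n"
    using mV unfolding mcar_def by auto
  have e: "S * ra V = ra V * S" "S * rb V = rb V * S" "S * rc V = rc V * S" using S unfolding is_hom_def by auto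
  have act: "X *\<^sub>v (S *\<^sub>v x) = S *\<^sub>v (X *\<^sub>v x)" if X: "X \<in> carrier_mat ?n ?n" and eX: "S * X = X * S"
    and x: "x \<in> carrier_vec ?n" for X x
  proof -
    have "X *\<^sub>v (S *\<^sub>v x) = (X * S) *\<^sub>v x" using X Sc x by simp
    also have "\<dots> = (S * X) *\<^sub>v x" using eX by simp
    also have "\<dots> = S *\<^sub>v (X *\<^sub>v x)" using X Sc x by simp
    finally show ?thesis .
  qed
  show ?thesis unfolding is_submod_def
  proof (intro conjI ballI allI)
    show "{S *\<^sub>v x | x. x \<in> carrier_vec ?n} \<subseteq> carrier_vec ?n" using Sc by auto
    show "0\<^sub>v ?n \<in> {S *\<^sub>v x | x. x \<in> carrier_vec ?n}"
      using Sc by (intro CollectI exI[of _ "0\<^sub>v ?n"]) (auto simp: mult_zero_vec)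
    fix x y assume "x \<in> {S *\<^sub>v x | x. x \<in> carrier_vec ?n}" "y \<in> {S *\<^sub>v x | x. x \<in> carrier_vec ?n}"
    then obtain x' y' where x': "x = S *\<^sub>v x'" "x' \<in> carrier_vec ?n" and y': "y = S *\<^sub>v y'" "y' \<in> carrier_vec ?n" by auto
    show "x + y \<in> {S *\<^sub>v x | x. x \<in> carrier_vec ?n}"
      using x' y' Sc by (intro CollectI exI[of _ "x' + y'"]) (auto simp: mult_add_distrib_mat_vec)
  next
    fix s x assume "x \<in> {S *\<^sub>v x | x. x \<in> carrier_vec ?n}"
    then obtain x' where x': "x = S *\<^sub>v x'" "x' \<in> carrier_vec ?n" by auto
    show "s \<cdot>\<^sub>v x \<in> {S *\<^sub>v x | x. x \<in> carrier_vec ?n}"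
      using x' Sc by (intro CollectI exI[of _ "s \<cdot>\<^sub>v x'"]) (auto simp: mult_mat_vec)
  next
    fix x assume "x \<in> {S *\<^sub>v x | x. x \<in> carrier_vec ?n}"
    then obtain x' where x': "x = S *\<^sub>v x'" "x' \<in> carrier_vec ?n" by auto
    show "ra V *\<^sub>v x \<in> {S *\<^sub>v x | x. x \<in> carrier_vec ?n}"
      using x' act[OF mats(1) e(1) x'(2)] mats by (intro CollectI exI[of _ "ra V *\<^sub>v x'"]) auto
    show "rb V *\<^sub>v x \<in> {S *\<^sub>v x | x. x \<in> carrier_vec ?n}"
      using x' act[OF mats(2) e(2) x'(2)] mats by (intro CollectI exI[of _ "rb V *\<^sub>v x'"]) auto
    show "rc V *\<^sub>v x \<in> {S *\<^sub>v x | x. x \<in> carrier_vec ?n}"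
      using x' act[OF mats(3) e(3) x'(2)] mats by (intro CollectI exI[of _ "rc V *\<^sub>v x'"]) auto
  qed
qed


lemma kernel_submod: assumes S: "is_hom (V :: 'k::field urep) V S" and mV: "mcar V"
  shows "is_submod {x \<in> carrier_vec (rdim V). S *\<^sub>v x = 0\<^sub>v (rdim V)} V"
proof -
  let ?n = "rdim V"
  let ?K = "{x \<in> carrier_vec ?n. S *\<^sub>v x = 0\<^sub>v ?n}"
  have Sc: "S \<in> carrier_mat ?n ?n" using S unfolding is_hom_def by auto
  have mats: "ra V \<in> carrier_mat ?n ?n" "rb V \<in> carrier_mat ?n ?n" "rc V \<in> carrier_mat ?n ?n"
    using mV unfolding mcar_def by auto
  have e: "S * ra V = ra V * S" "S * rb V = rb V * S" "S * rc V = rc V * S" using S unfolding is_hom_def by auto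
  have act: "X *\<^sub>v x \<in> ?K" if X: "X \<in> carrier_mat ?n ?n" and eX: "S * X = X * S" and x: "x \<in> ?K" for X x
  proof -
    have xc: "x \<in> carrier_vec ?n" and Sx: "S *\<^sub>v x = 0\<^sub>v ?n" using x by auto
    have "S *\<^sub>v (X *\<^sub>v x) = (S * X) *\<^sub>v x" using X Sc xc by simp
    also have "\<dots> = (X * S) *\<^sub>v x" using eX by simp
    also have "\<dots> = X *\<^sub>v (S *\<^sub>v x)" using X Sc xc by simp
    also have "\<dots> = 0\<^sub>v ?n" using Sx X by (simp add: mult_zero_vec)
    finally show ?thesis using X xc by simp
  qed
  show ?thesis unfolding is_submod_def
  proof (intro conjI ballI allI)
    show "?K \<subseteq> carrier_vec ?n" by auto
    show "0\<^sub>v ?n \<in> ?K" using Sc by (simp add: mult_zero_vec)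
    fix x y assume x: "x \<in> ?K" and y: "y \<in> ?K"
    show "x + y \<in> ?K" using x y Sc by (auto simp: mult_add_distrib_mat_vec)
  next
    fix s x assume x: "x \<in> ?K"
    show "s \<cdot>\<^sub>v x \<in> ?K" using x Sc by (auto simp: mult_mat_vec)
  next
    fix x assume x: "x \<in> ?K"
    show "ra V *\<^sub>v x \<in> ?K" by (rule act[OF mats(1) e(1) x])
    show "rb V *\<^sub>v x \<in> ?K" by (rule act[OF mats(2) e(2) x])
    show "rc V *\<^sub>v x \<in> ?K" by (rule act[OF mats(3) e(3) x])
  qed
qed

lemma vec_split: "a \<in> carrier_vec n \<Longrightarrow> b \<in> carrier_vec n \<Longrightarrow> a = b + (a - (b :: 'k::field vec))"
  by (intro eq_vecI) auto

lemma cover_endo_inv: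
  assumes cov: "is_projective_cover (P :: 'k::field urep) p V" and S: "is_hom P P S" and pS: "p * S = p"
  shows "\<exists>T. T \<in> carrier_mat (rdim P) (rdim P) \<and> S * T = 1\<^sub>m (rdim P) \<and> T * S = 1\<^sub>m (rdim P)"
proof -
  let ?n = "rdim P"
  have mP: "mcar P" using cov unfolding is_projective_cover_def is_projective_def by (auto intro: umod_mcar)
  have Sc: "S \<in> carrier_mat ?n ?n" using S unfolding is_hom_def by auto
  have pc: "p \<in> carrier_mat (rdim V) ?n" using cov unfolding is_projective_cover_def is_hom_def by auto
  let ?L = "{S *\<^sub>v x | x. x \<in> carrier_vec ?n}"
  have L: "is_submod ?L P" by (rule image_submod[OF S mP])
  have cov2: "\<forall>x \<in> carrier_vec ?n. \<exists>l\<in>?L. \<exists>k \<in> carrier_vec ?n. p *\<^sub>v k = 0\<^sub>v (rdim V) \<and> x = l + k"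
  proof
    fix x :: "'k vec" assume x: "x \<in> carrier_vec ?n"
    have Sx: "S *\<^sub>v x \<in> carrier_vec ?n" using Sc x by simp
    have "p *\<^sub>v (x - S *\<^sub>v x) = p *\<^sub>v x - p *\<^sub>v (S *\<^sub>v x)"
      using pc x Sx by (simp add: mult_minus_distrib_mat_vec)
    also have "p *\<^sub>v (S *\<^sub>v x) = (p * S) *\<^sub>v x" using pc Sc x by simp
    also have "p *\<^sub>v x - (p * S) *\<^sub>v x = 0\<^sub>v (rdim V)" using pS pc x by simp
    finally have "p *\<^sub>v (x - S *\<^sub>v x) = 0\<^sub>v (rdim V)" .
    then show "\<exists>l\<in>?L. \<exists>k \<in> carrier_vec ?n. p *\<^sub>v k = 0\<^sub>v (rdim V) \<and> x = l + k"
      using x Sx vec_split[OF x Sx] by (intro bexI[of _ "S *\<^sub>v x"] bexI[of _ "x - S *\<^sub>v x"]) auto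
  qed
  have sup: "\<forall>L. is_submod L P \<and>
        (\<forall>x \<in> carrier_vec (rdim P). \<exists>l\<in>L. \<exists>k \<in> carrier_vec (rdim P).
            p *\<^sub>v k = 0\<^sub>v (rdim V) \<and> x = l + k)
        \<longrightarrow> L = carrier_vec (rdim P)"
    using cov unfolding is_projective_cover_def by (elim conjE) assumption
  have Leq: "?L = carrier_vec ?n" using sup L cov2 by blast
  have "\<exists>x \<in> carrier_vec ?n. S *\<^sub>v x = y" if y: "y \<in> carrier_vec ?n" for y
  proof -
    have "y \<in> ?L" using y Leq by simp
    then obtain x where "y = S *\<^sub>v x" "x \<in> carrier_vec ?n" by blast
    then show ?thesis by blast
  qed
  then show ?thesis using sq_surj_inv[OF Sc] by blast
qed

lemma cover_unique: assumes c1: "is_projective_cover P p V" and c2: "is_projective_cover Q q V"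
  shows "umod_iso P (Q :: 'k::field urep)"
proof -
  have P: "is_projective P" "is_umod P" and Q: "is_projective Q" "is_umod Q" and V: "is_umod V"
    and p: "is_hom P V p" "hom_surj P V p" and q: "is_hom Q V q" "hom_surj Q V q"
    using c1 c2 unfolding is_projective_cover_def is_projective_def by auto
  have mP: "mcar P" and mQ: "mcar Q" and mV: "mcar V" using P Q V by (auto intro: umod_mcar)
  obtain h where h: "is_hom P Q h" and qh: "q * h = p" using P(1) Q(2) V q p unfolding is_projective_def by blast
  obtain k where k: "is_hom Q P k" and pk: "p * k = q" using Q(1) P(2) V q p unfolding is_projective_def by blast
  have hc: "h \<in> carrier_mat (rdim Q) (rdim P)" and kc: "k \<in> carrier_mat (rdim P) (rdim Q)"
    using h k unfolding is_hom_def by auto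
  have pc: "p \<in> carrier_mat (rdim V) (rdim P)" and qc: "q \<in> carrier_mat (rdim V) (rdim Q)"
    using p q unfolding is_hom_def by auto
  have hk: "is_hom Q Q (h * k)" by (rule hom_comp[OF mQ mP mQ h k])
  have kh: "is_hom P P (k * h)" by (rule hom_comp[OF mP mQ mP k h])
  have "q * (h * k) = q * h * k" using qc hc kc by simp
  then have qhk: "q * (h * k) = q" using qh pk by simp
  have "p * (k * h) = p * k * h" using pc hc kc by simp
  then have pkh: "p * (k * h) = p" using qh pk by simp
  obtain u where u: "u \<in> carrier_mat (rdim Q) (rdim Q)" "h * k * u = 1\<^sub>m (rdim Q)" "u * (h * k) = 1\<^sub>m (rdim Q)"
    using cover_endo_inv[OF c2 hk qhk] by blast
  obtain v where v: "v \<in> carrier_mat (rdim P) (rdim P)" "k * h * v = 1\<^sub>m (rdim P)" "v * (k * h) = 1\<^sub>m (rdim P)"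
    using cover_endo_inv[OF c1 kh pkh] by blast
  show ?thesis by (rule iso_from_invs[OF h k mP mQ u v])
qed

lemma env_endo_inv:
  assumes env: "is_injective_envelope (I :: 'k::field urep) i V" and S: "is_hom I I S" and Si: "S * i = i"
  shows "\<exists>T. T \<in> carrier_mat (rdim I) (rdim I) \<and> S * T = 1\<^sub>m (rdim I) \<and> T * S = 1\<^sub>m (rdim I)"
proof -
  let ?n = "rdim I"
  have mI: "mcar I" using env unfolding is_injective_envelope_def is_injective_def by (auto intro: umod_mcar)
  have Sc: "S \<in> carrier_mat ?n ?n" using S unfolding is_hom_def by auto
  have ic: "i \<in> carrier_mat ?n (rdim V)" using env unfolding is_injective_envelope_def is_hom_def by auto
  let ?K = "{x \<in> carrier_vec ?n. S *\<^sub>v x = 0\<^sub>v ?n}"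
  have K: "is_submod ?K I" by (rule kernel_submod[OF S mI])
  have "?K = {0\<^sub>v ?n}"
  proof (rule ccontr)
    assume "?K \<noteq> {0\<^sub>v ?n}"
    have ess: "\<forall>L. is_submod L I \<and> L \<noteq> {0\<^sub>v (rdim I)} \<longrightarrow>
        (\<exists>x \<in> carrier_vec (rdim V). i *\<^sub>v x \<in> L \<and> i *\<^sub>v x \<noteq> 0\<^sub>v (rdim I))"
      using env unfolding is_injective_envelope_def by (elim conjE) assumption
    obtain x where x: "x \<in> carrier_vec (rdim V)" "i *\<^sub>v x \<in> ?K" "i *\<^sub>v x \<noteq> 0\<^sub>v ?n"
      using ess K \<open>?K \<noteq> {0\<^sub>v ?n}\<close> by blast
    have "S *\<^sub>v (i *\<^sub>v x) = (S * i) *\<^sub>v x" using Sc ic x by simp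
    also have "\<dots> = i *\<^sub>v x" using Si by simp
    finally show False using x by simp
  qed
  then have "x = 0\<^sub>v ?n" if "x \<in> carrier_vec ?n" "S *\<^sub>v x = 0\<^sub>v ?n" for x
    using that by blast
  then show ?thesis using sq_inj_inv[OF Sc] by blast
qed

lemma env_unique: assumes e1: "is_injective_envelope I i V" and e2: "is_injective_envelope J j V"
  shows "umod_iso I (J :: 'k::field urep)"
proof -
  have I: "is_injective I" "is_umod I" and J: "is_injective J" "is_umod J" and V: "is_umod V"
    and i: "is_hom V I i" "hom_inj V I i" and j: "is_hom V J j" "hom_inj V J j"
    using e1 e2 unfolding is_injective_envelope_def is_injective_def by auto
  have mI: "mcar I" and mJ: "mcar J" and mV: "mcar V" using I J V by (auto intro: umod_mcar)
  obtain h where h: "is_hom J I h" and hj: "h * j = i" using I(1) J(2) V i j unfolding is_injective_def by blast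
  obtain k where k: "is_hom I J k" and ki: "k * i = j" using J(1) I(2) V i j unfolding is_injective_def by blast
  have hc: "h \<in> carrier_mat (rdim I) (rdim J)" and kc: "k \<in> carrier_mat (rdim J) (rdim I)"
    using h k unfolding is_hom_def by auto
  have ic: "i \<in> carrier_mat (rdim I) (rdim V)" and jc: "j \<in> carrier_mat (rdim J) (rdim V)"
    using i j unfolding is_hom_def by auto
  have kh: "is_hom J J (k * h)" by (rule hom_comp[OF mJ mI mJ k h])
  have hk: "is_hom I I (h * k)" by (rule hom_comp[OF mI mJ mI h k])
  have "k * h * j = k * (h * j)" using kc hc jc by simp
  then have khj: "k * h * j = j" using hj ki by simp
  have "h * k * i = h * (k * i)" using kc hc ic by simp
  then have hki: "h * k * i = i" using hj ki by simp
  obtain u where u: "u \<in> carrier_mat (rdim J) (rdim J)" "k * h * u = 1\<^sub>m (rdim J)" "u * (k * h) = 1\<^sub>m (rdim J)"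
    using env_endo_inv[OF e2 kh khj] by blast
  obtain v where v: "v \<in> carrier_mat (rdim I) (rdim I)" "h * k * v = 1\<^sub>m (rdim I)" "v * (h * k) = 1\<^sub>m (rdim I)"
    using env_endo_inv[OF e1 hk hki] by blast
  show ?thesis by (rule iso_from_invs[OF k h mI mJ u v])
qed

lemma length_bprod[simp]: "length (bprod n I1 I2) = length I2" by (simp add: bprod_def)
lemma length_bsum[simp]: "length (bsum n I1 I2) = min (length I1) (length I2)" by (simp add: bsum_def)

definition bumodchk :: "nat \<Rightarrow> nat list list \<Rightarrow> nat list list \<Rightarrow> nat list list \<Rightarrow> bool" where
  "bumodchk n IA IB IC \<longleftrightarrow> bok n IA \<and> bok n IB \<and> bok n IC \<and> length IA = n \<and> length IB = n \<and> length IC = n \<and>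
     bnorm n (bsum n (bprod n IA IB) (bprod n IB IA)) = bnorm n IC \<and>
     bnorm n (bsum n (bprod n IA IC) (bprod n IC IA)) = bnorm n IA \<and>
     bnorm n (bsum n (bprod n IB IC) (bprod n IC IB)) = bnorm n IB \<and>
     bnorm n (bprod n (bprod n (bprod n IA IA) IA) IA) = bnorm n (replicate n []) \<and>
     bnorm n (bprod n (bprod n (bprod n IB IB) IB) IB) = bnorm n (replicate n []) \<and>
     bnorm n (bsum n (bprod n IC IC) IC) = bnorm n (replicate n [])"

lemma bumod: assumes c: "char2 TYPE('k::field)" and d: "rdim (V :: 'k urep) = n"
  and A: "ra V = bmat n n IA" and B: "rb V = bmat n n IB" and C: "rc V = bmat n n IC"
  and chk: "bumodchk n IA IB IC"
  shows "is_umod V"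
proof -
  from chk have ok: "bok n IA" "bok n IB" "bok n IC" and len: "length IA = n" "length IB = n" "length IC = n"
    unfolding bumodchk_def by auto
  from chk have c1: "bnorm n (bsum n (bprod n IA IB) (bprod n IB IA)) = bnorm n IC"
    and c2: "bnorm n (bsum n (bprod n IA IC) (bprod n IC IA)) = bnorm n IA"
    and c3: "bnorm n (bsum n (bprod n IB IC) (bprod n IC IB)) = bnorm n IB"
    and c4: "bnorm n (bprod n (bprod n (bprod n IA IA) IA) IA) = bnorm n (replicate n [])"
    and c5: "bnorm n (bprod n (bprod n (bprod n IB IB) IB) IB) = bnorm n (replicate n [])"
    and c6: "bnorm n (bsum n (bprod n IC IC) IC) = bnorm n (replicate n [])"
    unfolding bumodchk_def by auto
  have m: "(bmat n n I1 :: 'k mat) * bmat n n I2 = bmat n n (bprod n I1 I2)" if "bok n I2" "length I2 = n" for I1 I2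
    using bmat_mult[OF c] that by blast
  have ad: "(bmat n n I1 :: 'k mat) + bmat n n I2 = bmat n n (bsum n I1 I2)" if "length I1 = n" "length I2 = n" for I1 I2
    using bmat_add[OF c] that by blast
  have eq: "(bmat n n I1 :: 'k mat) = bmat n n I2" if "length I1 = n" "length I2 = n" "bnorm n I1 = bnorm n I2" for I1 I2
    using bmat_eqI that by blast
  have z: "0\<^sub>m n n = (bmat n n (replicate n []) :: 'k mat)" by (rule bmat_zero)
  have p4: "(bmat n n I :: 'k mat) ^\<^sub>m 4 = bmat n n (bprod n (bprod n (bprod n I I) I) I)" if "bok n I" "length I = n" for I
  proof -
    have "(bmat n n I :: 'k mat) ^\<^sub>m 4 = bmat n n I * bmat n n I * bmat n n I * bmat n n I" by (rule bmat_pow4[OF bmat_carrier])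
    then show ?thesis by (simp only: m[OF that])
  qed
  have e1: "bmat n n IA * bmat n n IB + bmat n n IB * bmat n n IA = (bmat n n IC :: 'k mat)"
    by (simp only: m[OF ok(2) len(2)] m[OF ok(1) len(1)] ad[of "bprod n IA IB" "bprod n IB IA"] length_bprod len)
       (rule eq, simp_all add: len c1)
  have e2: "bmat n n IA * bmat n n IC + bmat n n IC * bmat n n IA = (bmat n n IA :: 'k mat)"
    by (simp only: m[OF ok(3) len(3)] m[OF ok(1) len(1)] ad[of "bprod n IA IC" "bprod n IC IA"] length_bprod len)
       (rule eq, simp_all add: len c2)
  have e3: "bmat n n IB * bmat n n IC + bmat n n IC * bmat n n IB = (bmat n n IB :: 'k mat)"
    by (simp only: m[OF ok(3) len(3)] m[OF ok(2) len(2)] ad[of "bprod n IB IC" "bprod n IC IB"] length_bprod len)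
       (rule eq, simp_all add: len c3)
  have e4: "(bmat n n IA :: 'k mat) ^\<^sub>m 4 = 0\<^sub>m n n"
    by (simp only: p4[OF ok(1) len(1)] z) (rule eq, simp_all add: len c4)
  have e5: "(bmat n n IB :: 'k mat) ^\<^sub>m 4 = 0\<^sub>m n n"
    by (simp only: p4[OF ok(2) len(2)] z) (rule eq, simp_all add: len c5)
  have e6: "(bmat n n IC :: 'k mat) * bmat n n IC + bmat n n IC = 0\<^sub>m n n"
    by (simp only: m[OF ok(3) len(3)] ad[of "bprod n IC IC" IC] length_bprod len z)
       (rule eq, simp_all add: len c6)
  show ?thesis unfolding is_umod_def Let_def d A B C
    using e1 e2 e3 e4 e5 e6 by simp
qed

definition bhomchk :: "nat \<Rightarrow> nat \<Rightarrow> nat list list \<Rightarrow> nat list list \<Rightarrow> nat list list \<Rightarrow> nat list list \<Rightarrow>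
    nat list list \<Rightarrow> nat list list \<Rightarrow> nat list list \<Rightarrow> bool" where
  "bhomchk m n IF IVa IVb IVc IWa IWb IWc \<longleftrightarrow> bok n IVa \<and> bok n IVb \<and> bok n IVc \<and> bok m IF \<and>
     length IVa = n \<and> length IVb = n \<and> length IVc = n \<and> length IF = n \<and>
     bnorm m (bprod m IF IVa) = bnorm m (bprod m IWa IF) \<and>
     bnorm m (bprod m IF IVb) = bnorm m (bprod m IWb IF) \<and>
     bnorm m (bprod m IF IVc) = bnorm m (bprod m IWc IF)"

lemma bhom: assumes c: "char2 TYPE('k::field)" and dV: "rdim (V :: 'k urep) = n" and dW: "rdim W = m"
  and A: "ra V = bmat n n IVa" "rb V = bmat n n IVb" "rc V = bmat n n IVc"
  and B: "ra W = bmat m m IWa" "rb W = bmat m m IWb" "rc W = bmat m m IWc"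
  and chk: "bhomchk m n IF IVa IVb IVc IWa IWb IWc"
  shows "is_hom V W (bmat m n IF)"
proof -
  from chk have ok: "bok n IVa" "bok n IVb" "bok n IVc" "bok m IF"
    and len: "length IVa = n" "length IVb = n" "length IVc = n" "length IF = n"
    and c1: "bnorm m (bprod m IF IVa) = bnorm m (bprod m IWa IF)"
    and c2: "bnorm m (bprod m IF IVb) = bnorm m (bprod m IWb IF)"
    and c3: "bnorm m (bprod m IF IVc) = bnorm m (bprod m IWc IF)"
    unfolding bhomchk_def by auto
  have m1: "(bmat m n IF :: 'k mat) * bmat n n I2 = bmat m n (bprod m IF I2)" if "bok n I2" "length I2 = n" for I2
    using bmat_mult[OF c] that by blast
  have m2: "(bmat m m I1 :: 'k mat) * bmat m n IF = bmat m n (bprod m I1 IF)" for I1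
    using bmat_mult[OF c len(4) ok(4)] by blast
  have eq: "(bmat m n I1 :: 'k mat) = bmat m n I2" if "length I1 = n" "length I2 = n" "bnorm m I1 = bnorm m I2" for I1 I2
    using bmat_eqI that by blast
  have e1: "(bmat m n IF :: 'k mat) * bmat n n IVa = bmat m m IWa * bmat m n IF"
    by (simp only: m1[OF ok(1) len(1)] m2) (rule eq, simp_all add: len c1)
  have e2: "(bmat m n IF :: 'k mat) * bmat n n IVb = bmat m m IWb * bmat m n IF"
    by (simp only: m1[OF ok(2) len(2)] m2) (rule eq, simp_all add: len c2)
  have e3: "(bmat m n IF :: 'k mat) * bmat n n IVc = bmat m m IWc * bmat m n IF"
    by (simp only: m1[OF ok(3) len(3)] m2) (rule eq, simp_all add: len c3)
  show ?thesis unfolding is_hom_def dV dW A B using e1 e2 e3 by simp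
qed

definition MA :: "nat list list" where "MA = [[1],[2],[3],[],[5],[6],[7],[]]"
definition MB :: "nat list list" where "MB = [[],[0],[1],[],[2],[3],[5],[6]]"
definition MC :: "nat list list" where "MC = [[0],[],[2],[],[],[5],[],[7]]"
definition NA :: "nat list list" where "NA = [[1],[2],[3],[],[5],[6],[7],[]]"
definition NB :: "nat list list" where "NB = [[],[],[1],[2],[0],[1,4],[2,5],[3]]"
definition NC :: "nat list list" where "NC = [[],[1],[],[3],[4],[],[6],[]]"
definition V1A :: "nat list list" where "V1A = [[1],[2],[]]"
definition V1B :: "nat list list" where "V1B = [[],[0],[1]]"
definition V1C :: "nat list list" where "V1C = [[0],[],[2]]"

lemma M_simps[simp]: "rdim M = 8" "ra M = bmat 8 8 MA" "rb M = bmat 8 8 MB" "rc M = bmat 8 8 MC"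
  by (simp_all add: M_def basis_mat_bmat MA_def MB_def MC_def)
lemma N_simps[simp]: "rdim N = 8" "ra N = bmat 8 8 NA" "rb N = bmat 8 8 NB" "rc N = bmat 8 8 NC"
  by (simp_all add: N_def basis_mat_bmat NA_def NB_def NC_def)
lemma V1_simps[simp]: "rdim V1 = 3" "ra V1 = bmat 3 3 V1A" "rb V1 = bmat 3 3 V1B" "rc V1 = bmat 3 3 V1C"
  by (simp_all add: V1_def basis_mat_bmat V1A_def V1B_def V1C_def)
lemma V0_simps[simp]: "rdim V0 = 1" "ra V0 = bmat 1 1 [[]]" "rb V0 = bmat 1 1 [[]]" "rc V0 = bmat 1 1 [[]]"
  by (simp_all add: V0_def bmat_zero[of 1 1, simplified])

lemma chk_M: "bumodchk 8 MA MB MC" by code_simp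
lemma chk_N: "bumodchk 8 NA NB NC" by code_simp
lemma chk_V1: "bumodchk 3 V1A V1B V1C" by code_simp
lemma chk_V0: "bumodchk 1 [[]] [[]] [[]]" by code_simp

lemma umod_M: "char2 TYPE('k::field) \<Longrightarrow> is_umod (M :: 'k urep)"
  by (rule bumod[OF _ _ _ _ _ chk_M]) simp_all
lemma umod_N: "char2 TYPE('k::field) \<Longrightarrow> is_umod (N :: 'k urep)"
  by (rule bumod[OF _ _ _ _ _ chk_N]) simp_all
lemma umod_V1: "char2 TYPE('k::field) \<Longrightarrow> is_umod (V1 :: 'k urep)"
  by (rule bumod[OF _ _ _ _ _ chk_V1]) simp_all
lemma umod_V0: "char2 TYPE('k::field) \<Longrightarrow> is_umod (V0 :: 'k urep)"
  by (rule bumod[OF _ _ _ _ _ chk_V0]) simp_all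


lemma bone: assumes c: "char2 TYPE('k::field)" and chk: "bok n2 IS \<and> length IS = n \<and> bnorm n (bprod n IT IS) = bnorm n (map (\<lambda>j. [j]) [0..<n])"
  shows "(bmat n n2 IT :: 'k mat) * bmat n2 n IS = 1\<^sub>m n"
proof -
  have "(bmat n n2 IT :: 'k mat) * bmat n2 n IS = bmat n n (bprod n IT IS)" using bmat_mult[OF c] chk by blast
  also have "\<dots> = bmat n n (map (\<lambda>j. [j]) [0..<n])" using chk by (intro bmat_eqI) auto
  also have "\<dots> = 1\<^sub>m n" by (rule bmat_one[symmetric])
  finally show ?thesis .
qed

definition sM :: "nat list list" where "sM = [[3], [7], [11], [15], [0, 5, 10], [4, 9, 14], [8, 13], [12]]"
definition pM :: "nat list list" where "pM = [[4], [2], [1], [0], [5], [3], [2], [1], [6], [], [3], [2], [7], [], [], [3]]"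
definition sN :: "nat list list" where "sN = [[2, 7], [6, 11], [10, 15], [14], [1, 11], [5, 15], [9], [13]]"
definition pN :: "nat list list" where "pN = [[2, 5], [4], [0], [], [3, 6], [5], [1], [], [7], [6], [2], [], [], [7], [3], []]"
definition sMT :: "nat list list" where "sMT = [[12], [8, 13], [4, 9, 14], [0, 5, 10], [15], [11], [7], [3]]"
definition pMT :: "nat list list" where "pMT = [[3], [5], [6], [7], [2], [4], [5], [6], [1], [], [4], [5], [0], [], [], [4]]"
definition sNT :: "nat list list" where "sNT = [[13], [9], [5, 15], [1, 11], [14], [10, 15], [6, 11], [2, 7]]"
definition pNT :: "nat list list" where "pNT = [[2, 5], [3], [7], [], [1, 4], [2], [6], [], [0], [1], [5], [], [], [0], [4], []]"

lemma chk_sM: "bhomchk 16 8 sM MA MB MC QA QB QC" by code_simp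
lemma chk_pM: "bhomchk 8 16 pM QA QB QC MA MB MC" by code_simp
lemma chk_pMsM: "bok 16 sM \<and> length sM = 8 \<and> bnorm 8 (bprod 8 pM sM) = bnorm 8 (map (\<lambda>j. [j]) [0..<8])" by code_simp
lemma chk_sN: "bhomchk 16 8 sN NA NB NC QA QB QC" by code_simp
lemma chk_pN: "bhomchk 8 16 pN QA QB QC NA NB NC" by code_simp
lemma chk_pNsN: "bok 16 sN \<and> length sN = 8 \<and> bnorm 8 (bprod 8 pN sN) = bnorm 8 (map (\<lambda>j. [j]) [0..<8])" by code_simp
lemma chk_sMT: "bhomchk 16 8 sMT (btr 8 8 MA) (btr 8 8 MB) (btr 8 8 MC) QA QB QC" by code_simp
lemma chk_pMT: "bhomchk 8 16 pMT QA QB QC (btr 8 8 MA) (btr 8 8 MB) (btr 8 8 MC)" by code_simp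
lemma chk_pMTsMT: "bok 16 sMT \<and> length sMT = 8 \<and> bnorm 8 (bprod 8 pMT sMT) = bnorm 8 (map (\<lambda>j. [j]) [0..<8])" by code_simp
lemma chk_sNT: "bhomchk 16 8 sNT (btr 8 8 NA) (btr 8 8 NB) (btr 8 8 NC) QA QB QC" by code_simp
lemma chk_pNT: "bhomchk 8 16 pNT QA QB QC (btr 8 8 NA) (btr 8 8 NB) (btr 8 8 NC)" by code_simp
lemma chk_pNTsNT: "bok 16 sNT \<and> length sNT = 8 \<and> bnorm 8 (bprod 8 pNT sNT) = bnorm 8 (map (\<lambda>j. [j]) [0..<8])" by code_simp

lemma proj_M: assumes c: "char2 TYPE('k::field)" shows "is_projective (M :: 'k urep)"
  by (rule summand_proj[OF c umod_M[OF c] bhom[OF c _ _ _ _ _ _ _ _ chk_sM] bhom[OF c _ _ _ _ _ _ _ _ chk_pM]])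
     (simp_all add: bone[OF c chk_pMsM])
lemma proj_N: assumes c: "char2 TYPE('k::field)" shows "is_projective (N :: 'k urep)"
  by (rule summand_proj[OF c umod_N[OF c] bhom[OF c _ _ _ _ _ _ _ _ chk_sN] bhom[OF c _ _ _ _ _ _ _ _ chk_pN]])
     (simp_all add: bone[OF c chk_pNsN])
lemma proj_trM: assumes c: "char2 TYPE('k::field)" shows "is_projective (tr (M :: 'k urep))"
  by (rule summand_proj[OF c umod_tr[OF umod_M[OF c]] bhom[OF c _ _ _ _ _ _ _ _ chk_sMT] bhom[OF c _ _ _ _ _ _ _ _ chk_pMT]])
     (simp_all add: bone[OF c chk_pMTsMT] bmat_transpose)
lemma proj_trN: assumes c: "char2 TYPE('k::field)" shows "is_projective (tr (N :: 'k urep))"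
  by (rule summand_proj[OF c umod_tr[OF umod_N[OF c]] bhom[OF c _ _ _ _ _ _ _ _ chk_sNT] bhom[OF c _ _ _ _ _ _ _ _ chk_pNT]])
     (simp_all add: bone[OF c chk_pNTsNT] bmat_transpose)

lemma inj_M: "char2 TYPE('k::field) \<Longrightarrow> is_injective (M :: 'k urep)"
  by (rule proj_tr_inj[OF umod_M proj_trM])
lemma inj_N: "char2 TYPE('k::field) \<Longrightarrow> is_injective (N :: 'k urep)"
  by (rule proj_tr_inj[OF umod_N proj_trN])

lemma less8: "(i::nat) < 8 \<Longrightarrow> i = 0 \<or> i = 1 \<or> i = 2 \<or> i = 3 \<or> i = 4 \<or> i = 5 \<or> i = 6 \<or> i = 7" by presburger
lemma less3: "(i::nat) < 3 \<Longrightarrow> i = 0 \<or> i = 1 \<or> i = 2" by presburger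

definition v8 :: "'k::field \<Rightarrow> 'k \<Rightarrow> 'k \<Rightarrow> 'k \<Rightarrow> 'k \<Rightarrow> 'k \<Rightarrow> 'k \<Rightarrow> 'k \<Rightarrow> 'k vec" where
  "v8 a0 a1 a2 a3 a4 a5 a6 a7 = vec 8 (\<lambda>i. [a0, a1, a2, a3, a4, a5, a6, a7] ! i)"

lemma v8_carrier[simp]: "v8 a0 a1 a2 a3 a4 a5 a6 a7 \<in> carrier_vec 8" and v8_dim[simp]: "dim_vec (v8 a0 a1 a2 a3 a4 a5 a6 a7) = 8"
  unfolding v8_def by auto

lemma v8_index[simp]: "v8 a0 a1 a2 a3 a4 a5 a6 a7 $ 0 = a0" "v8 a0 a1 a2 a3 a4 a5 a6 a7 $ 1 = a1"
  "v8 a0 a1 a2 a3 a4 a5 a6 a7 $ 2 = a2" "v8 a0 a1 a2 a3 a4 a5 a6 a7 $ 3 = a3"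
  "v8 a0 a1 a2 a3 a4 a5 a6 a7 $ 4 = a4" "v8 a0 a1 a2 a3 a4 a5 a6 a7 $ 5 = a5"
  "v8 a0 a1 a2 a3 a4 a5 a6 a7 $ 6 = a6" "v8 a0 a1 a2 a3 a4 a5 a6 a7 $ 7 = a7"
  "v8 a0 a1 a2 a3 a4 a5 a6 a7 $ Suc 0 = a1"
  unfolding v8_def by simp_all

lemma v8_ext: assumes "x \<in> carrier_vec 8" "x $ 0 = a0" "x $ 1 = a1" "x $ 2 = a2" "x $ 3 = a3"
  "x $ 4 = a4" "x $ 5 = a5" "x $ 6 = a6" "x $ 7 = a7"
  shows "x = v8 a0 a1 a2 a3 a4 a5 a6 a7"
proof (rule eq_vecI)
  fix i assume "i < dim_vec (v8 a0 a1 a2 a3 a4 a5 a6 a7)"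
  then have "i < 8" by simp
  then show "x $ i = v8 a0 a1 a2 a3 a4 a5 a6 a7 $ i" using assms by (auto dest!: less8)
qed (use assms in simp)

lemma v8_eta: "x \<in> carrier_vec 8 \<Longrightarrow> x = v8 (x$0) (x$1) (x$2) (x$3) (x$4) (x$5) (x$6) (x$7)"
  by (rule v8_ext) auto

lemma v8_add[simp]: "v8 a0 a1 a2 a3 a4 a5 a6 a7 + v8 b0 b1 b2 b3 b4 b5 b6 b7 =
    v8 (a0+b0) (a1+b1) (a2+b2) (a3+b3) (a4+b4) (a5+b5) (a6+b6) (a7+b7)"
  by (rule v8_ext) auto
lemma v8_smult[simp]: "s \<cdot>\<^sub>v v8 a0 a1 a2 a3 a4 a5 a6 a7 = v8 (s*a0) (s*a1) (s*a2) (s*a3) (s*a4) (s*a5) (s*a6) (s*a7)"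
  by (rule v8_ext) auto
lemma v8_eq_iff[simp]: "v8 a0 a1 a2 a3 a4 a5 a6 a7 = v8 b0 b1 b2 b3 b4 b5 b6 b7 \<longleftrightarrow>
    a0 = b0 \<and> a1 = b1 \<and> a2 = b2 \<and> a3 = b3 \<and> a4 = b4 \<and> a5 = b5 \<and> a6 = b6 \<and> a7 = b7"
  by (metis v8_index)
lemma v8_zero: "0\<^sub>v 8 = v8 0 0 0 0 0 0 0 0"
  by (rule v8_ext) auto

lemma bmat_mult_vec_index: assumes x: "x \<in> carrier_vec m" and i: "i < n"
  shows "(bmat n m I *\<^sub>v x) $ i = sum_list (map (\<lambda>l. x $ l) (btr n m I ! i))"
proof -
  have "(bmat n m I *\<^sub>v x) $ i = (\<Sum>l\<in>{0..<m}. (if i \<in> set (I ! l) then 1 else 0) * x $ l)"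
    using x i by (simp add: scalar_prod_def)
  also have "\<dots> = (\<Sum>l\<in>{0..<m}. if i \<in> set (I ! l) then x $ l else 0)" by (rule sum.cong) auto
  also have "\<dots> = (\<Sum>l\<in>{0..<m} \<inter> {l. i \<in> set (I ! l)}. x $ l)" by (simp add: sum.inter_restrict)
  also have "{0..<m} \<inter> {l. i \<in> set (I ! l)} = set (filter (\<lambda>l. i \<in> set (I ! l)) [0..<m])" by auto
  also have "(\<Sum>l\<in>set (filter (\<lambda>l. i \<in> set (I ! l)) [0..<m]). x $ l) = sum_list (map (\<lambda>l. x $ l) (filter (\<lambda>l. i \<in> set (I ! l)) [0..<m]))"
    by (rule sum_list_distinct_conv_sum_set[symmetric]) simp
  finally show ?thesis using i by (simp add: btr_def)
qed

lemma btr_MA: "btr 8 8 MA = [[], [0], [1], [2], [], [4], [5], [6]]" by code_simp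
lemma btr_MB: "btr 8 8 MB = [[1], [2], [4], [5], [], [6], [7], []]" by code_simp
lemma btr_MC: "btr 8 8 MC = [[0], [], [2], [], [], [5], [], [7]]" by code_simp
lemma btr_NA: "btr 8 8 NA = [[], [0], [1], [2], [], [4], [5], [6]]" by code_simp
lemma btr_NB: "btr 8 8 NB = [[4], [2, 5], [3, 6], [7], [5], [6], [], []]" by code_simp
lemma btr_NC: "btr 8 8 NC = [[], [1], [], [3], [4], [], [6], []]" by code_simp

lemma bmat8_v8: "bmat 8 8 I *\<^sub>v v8 a0 a1 a2 a3 a4 a5 a6 a7 =
   v8 (sum_list (map (\<lambda>l. [a0, a1, a2, a3, a4, a5, a6, a7] ! l) (btr 8 8 I ! 0)))
      (sum_list (map (\<lambda>l. [a0, a1, a2, a3, a4, a5, a6, a7] ! l) (btr 8 8 I ! 1)))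
      (sum_list (map (\<lambda>l. [a0, a1, a2, a3, a4, a5, a6, a7] ! l) (btr 8 8 I ! 2)))
      (sum_list (map (\<lambda>l. [a0, a1, a2, a3, a4, a5, a6, a7] ! l) (btr 8 8 I ! 3)))
      (sum_list (map (\<lambda>l. [a0, a1, a2, a3, a4, a5, a6, a7] ! l) (btr 8 8 I ! 4)))
      (sum_list (map (\<lambda>l. [a0, a1, a2, a3, a4, a5, a6, a7] ! l) (btr 8 8 I ! 5)))
      (sum_list (map (\<lambda>l. [a0, a1, a2, a3, a4, a5, a6, a7] ! l) (btr 8 8 I ! 6)))
      (sum_list (map (\<lambda>l. [a0, a1, a2, a3, a4, a5, a6, a7] ! l) (btr 8 8 I ! 7)))"
proof -
  have e: "v8 a0 a1 a2 a3 a4 a5 a6 a7 $ l = [a0, a1, a2, a3, a4, a5, a6, a7] ! l" if "l < 8" for l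
    using that by (simp add: v8_def)
  have s: "sum_list (map (\<lambda>l. v8 a0 a1 a2 a3 a4 a5 a6 a7 $ l) (btr 8 8 I ! i)) =
           sum_list (map (\<lambda>l. [a0, a1, a2, a3, a4, a5, a6, a7] ! l) (btr 8 8 I ! i))" if "i < 8" for i
  proof -
    have "set (btr 8 8 I ! i) \<subseteq> {0..<8}" using that by (auto simp: btr_def)
    then show ?thesis by (intro arg_cong[where f = sum_list] map_cong) (auto simp: e)
  qed
  have idx: "(bmat 8 8 I *\<^sub>v v8 a0 a1 a2 a3 a4 a5 a6 a7) $ i = sum_list (map (\<lambda>l. [a0, a1, a2, a3, a4, a5, a6, a7] ! l) (btr 8 8 I ! i))"
    if "i < 8" for i
    by (rule trans[OF bmat_mult_vec_index[OF v8_carrier[of a0 a1 a2 a3 a4 a5 a6 a7] that] s[OF that]])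
  show ?thesis
    apply (rule v8_ext)
    apply (rule mult_mat_vec_carrier[OF bmat_carrier v8_carrier])
    apply (rule idx, simp)+
    done
qed

lemma MA_v8[simp]: "bmat 8 8 MA *\<^sub>v v8 a0 a1 a2 a3 a4 a5 a6 a7 = v8 0 a0 a1 a2 0 a4 a5 a6"
  by (simp add: bmat8_v8 btr_MA)
lemma MB_v8[simp]: "bmat 8 8 MB *\<^sub>v v8 a0 a1 a2 a3 a4 a5 a6 a7 = v8 a1 a2 a4 a5 0 a6 a7 0"
  by (simp add: bmat8_v8 btr_MB)
lemma MC_v8[simp]: "bmat 8 8 MC *\<^sub>v v8 a0 a1 a2 a3 a4 a5 a6 a7 = v8 a0 0 a2 0 0 a5 0 a7"
  by (simp add: bmat8_v8 btr_MC)
lemma NA_v8[simp]: "bmat 8 8 NA *\<^sub>v v8 a0 a1 a2 a3 a4 a5 a6 a7 = v8 0 a0 a1 a2 0 a4 a5 a6"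
  by (simp add: bmat8_v8 btr_NA)
lemma NB_v8[simp]: "bmat 8 8 NB *\<^sub>v v8 a0 a1 a2 a3 a4 a5 a6 a7 = v8 a4 (a2 + a5) (a3 + a6) a7 a5 a6 0 0"
  by (simp add: bmat8_v8 btr_NB)
lemma NC_v8[simp]: "bmat 8 8 NC *\<^sub>v v8 a0 a1 a2 a3 a4 a5 a6 a7 = v8 0 a1 0 a3 a4 0 a6 0"
  by (simp add: bmat8_v8 btr_NC)


lemma sA: "is_submod L V \<Longrightarrow> x \<in> L \<Longrightarrow> ra V *\<^sub>v x \<in> L" unfolding is_submod_def by blast
lemma sB: "is_submod L V \<Longrightarrow> x \<in> L \<Longrightarrow> rb V *\<^sub>v x \<in> L" unfolding is_submod_def by blast
lemma sC: "is_submod L V \<Longrightarrow> x \<in> L \<Longrightarrow> rc V *\<^sub>v x \<in> L" unfolding is_submod_def by blast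
lemma sadd: "is_submod L V \<Longrightarrow> x \<in> L \<Longrightarrow> y \<in> L \<Longrightarrow> x + y \<in> L" unfolding is_submod_def by blast
lemma ssm: "is_submod L V \<Longrightarrow> x \<in> L \<Longrightarrow> s \<cdot>\<^sub>v x \<in> L" unfolding is_submod_def by blast
lemma ssub: "is_submod L V \<Longrightarrow> x \<in> L \<Longrightarrow> L \<subseteq> carrier_vec (rdim V)" unfolding is_submod_def by blast

lemma span8: assumes L: "is_submod L (V :: 'k::field urep)" and d: "rdim V = 8"
  and e: "v8 1 0 0 0 0 0 0 0 \<in> L" "v8 0 1 0 0 0 0 0 0 \<in> L" "v8 0 0 1 0 0 0 0 0 \<in> L" "v8 0 0 0 1 0 0 0 0 \<in> L"
    "v8 0 0 0 0 1 0 0 0 \<in> L" "v8 0 0 0 0 0 1 0 0 \<in> L" "v8 0 0 0 0 0 0 1 0 \<in> L" "v8 0 0 0 0 0 0 0 (1::'k) \<in> L"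
  shows "L = carrier_vec 8"
proof
  show "L \<subseteq> carrier_vec 8" using L d unfolding is_submod_def by auto
  show "carrier_vec 8 \<subseteq> L"
  proof
    fix x :: "'k vec" assume x: "x \<in> carrier_vec 8"
    have "x = (x$0) \<cdot>\<^sub>v v8 1 0 0 0 0 0 0 0 + ((x$1) \<cdot>\<^sub>v v8 0 1 0 0 0 0 0 0 + ((x$2) \<cdot>\<^sub>v v8 0 0 1 0 0 0 0 0 +
      ((x$3) \<cdot>\<^sub>v v8 0 0 0 1 0 0 0 0 + ((x$4) \<cdot>\<^sub>v v8 0 0 0 0 1 0 0 0 + ((x$5) \<cdot>\<^sub>v v8 0 0 0 0 0 1 0 0 +
      ((x$6) \<cdot>\<^sub>v v8 0 0 0 0 0 0 1 0 + (x$7) \<cdot>\<^sub>v v8 0 0 0 0 0 0 0 1))))))"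
      by (subst v8_eta[OF x]) simp
    also have "\<dots> \<in> L" using e by (intro sadd[OF L] ssm[OF L])+
    finally show "x \<in> L" .
  qed
qed

definition pcM :: "nat list list" where "pcM = [[],[],[],[],[0],[],[],[]]"
lemma chk_pcM: "bhomchk 1 8 pcM MA MB MC [[]] [[]] [[]]" by code_simp
lemma btr_pcM: "btr 1 8 pcM = [[4]]" by code_simp

lemma cover_M: assumes c: "char2 TYPE('k::field)" shows "is_projective_cover (M :: 'k urep) (bmat 1 8 pcM) V0"
  unfolding is_projective_cover_def
proof (intro conjI allI impI)
  show "is_projective (M :: 'k urep)" by (rule proj_M[OF c])
  show "is_umod (V0 :: 'k urep)" by (rule umod_V0[OF c])
  show "is_hom (M :: 'k urep) V0 (bmat 1 8 pcM)" by (rule bhom[OF c _ _ _ _ _ _ _ _ chk_pcM]) simp_all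
  have pv: "(bmat 1 8 pcM *\<^sub>v x) $ 0 = x $ 4" if "x \<in> carrier_vec 8" for x :: "'k vec"
    using bmat_mult_vec_index[OF that, of 0 1 pcM] unfolding btr_pcM by simp
  show "hom_surj (M :: 'k urep) V0 (bmat 1 8 pcM)" unfolding hom_surj_def
  proof
    fix y :: "'k vec" assume y: "y \<in> carrier_vec (rdim V0)"
    show "\<exists>x\<in>carrier_vec (rdim M). bmat 1 8 pcM *\<^sub>v x = y"
    proof (intro bexI)
      show "bmat 1 8 pcM *\<^sub>v v8 0 0 0 0 (y$0) 0 0 0 = y"
        using y pv[of "v8 0 0 0 0 (y$0) 0 0 0"] by (intro eq_vecI) auto
    qed simp
  qed
  fix L assume a: "is_submod L (M :: 'k urep) \<and>
        (\<forall>x \<in> carrier_vec (rdim M). \<exists>l\<in>L. \<exists>k \<in> carrier_vec (rdim M).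
            bmat 1 8 pcM *\<^sub>v k = 0\<^sub>v (rdim V0) \<and> x = l + k)"
  then have L: "is_submod L (M :: 'k urep)" by blast
  from a have H: "\<forall>x\<in>carrier_vec 8. \<exists>l\<in>L. \<exists>k\<in>carrier_vec 8. bmat 1 8 pcM *\<^sub>v k = 0\<^sub>v 1 \<and> x = l + k"
    by simp
  obtain l k where l: "l \<in> L" and k: "k \<in> carrier_vec 8" and pk: "bmat 1 8 pcM *\<^sub>v k = 0\<^sub>v 1"
    and e4: "v8 0 0 0 0 1 0 0 0 = l + k" using bspec[OF H v8_carrier[of 0 0 0 0 1 0 0 0]] by blast
  have lc: "l \<in> carrier_vec 8" using subsetD[OF ssub[OF L l] l] by simp
  have k4: "k $ 4 = 0" using pv[OF k] arg_cong[OF pk, of "\<lambda>v. v $ 0"] by simp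
  have "(v8 0 0 0 0 1 0 0 0 :: 'k vec) $ 4 = (l + k) $ 4" using e4 by simp
  then have l4: "l $ 4 = 1" using lc k k4 by simp
  define l0 l1 l2 l3 l5 l6 l7 where "l0 = l$0" "l1 = l$1" "l2 = l$2" "l3 = l$3" "l5 = l$5" "l6 = l$6" "l7 = l$7"
  have leq: "l = v8 l0 l1 l2 l3 1 l5 l6 l7" using v8_eta[OF lc] l4 by (simp add: l0_l1_l2_l3_l5_l6_l7_def)
  have two: "\<And>x::'k. x + x = 0" by (rule char2_add[OF c])
  have u1: "l + rc M *\<^sub>v l \<in> L" by (intro sadd[OF L] sC[OF L] l)
  have u1e: "l + rc M *\<^sub>v l = v8 0 l1 0 l3 1 0 l6 0" by (simp add: leq two)
  have E7: "v8 0 0 0 0 0 0 0 1 \<in> L"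
    using sA[OF L, OF sA[OF L, OF sA[OF L u1[unfolded u1e]]]] by simp
  have E6: "v8 0 0 0 0 0 0 1 0 \<in> L" using sB[OF L E7] by simp
  have E5: "v8 0 0 0 0 0 1 0 0 \<in> L" using sB[OF L E6] by simp
  have E3: "v8 0 0 0 1 0 0 0 0 \<in> L" using sB[OF L E5] by simp
  have u2: "v8 0 l1 0 l3 1 0 l6 0 + ((- l3) \<cdot>\<^sub>v v8 0 0 0 1 0 0 0 0 + (- l6) \<cdot>\<^sub>v v8 0 0 0 0 0 0 1 0) \<in> L"
    by (rule sadd[OF L u1[unfolded u1e] sadd[OF L ssm[OF L E3] ssm[OF L E6]]])
  have u2e: "v8 0 l1 0 l3 1 0 l6 0 + ((- l3) \<cdot>\<^sub>v v8 0 0 0 1 0 0 0 0 + (- l6) \<cdot>\<^sub>v v8 0 0 0 0 0 0 1 0) = v8 0 l1 0 0 1 0 0 (0::'k)"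
    by simp
  have E1: "v8 0 1 0 0 0 0 0 0 \<in> L" using sB[OF L, OF sB[OF L u2]] by (simp add: u2e)
  have E4: "v8 0 0 0 0 1 0 0 0 \<in> L"
  proof -
    have "v8 0 l1 0 0 1 0 0 0 + (- l1) \<cdot>\<^sub>v v8 0 1 0 0 0 0 0 0 \<in> L" by (rule sadd[OF L u2[unfolded u2e] ssm[OF L E1]])
    then show ?thesis by simp
  qed
  have E2: "v8 0 0 1 0 0 0 0 0 \<in> L" using sB[OF L E4] by simp
  have E0: "v8 1 0 0 0 0 0 0 0 \<in> L" using sB[OF L E1] by simp
  show "L = carrier_vec (rdim M)" using span8[OF L _ E0 E1 E2 E3 E4 E5 E6 E7] by simp
qed


definition pcN :: "nat list list" where "pcN = [[],[],[],[],[0],[1],[2],[]]"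
lemma chk_pcN: "bhomchk 3 8 pcN NA NB NC V1A V1B V1C" by code_simp
lemma btr_pcN: "btr 3 8 pcN = [[4],[5],[6]]" by code_simp

lemma cover_N: assumes c: "char2 TYPE('k::field)" shows "is_projective_cover (N :: 'k urep) (bmat 3 8 pcN) V1"
  unfolding is_projective_cover_def
proof (intro conjI allI impI)
  show "is_projective (N :: 'k urep)" by (rule proj_N[OF c])
  show "is_umod (V1 :: 'k urep)" by (rule umod_V1[OF c])
  show "is_hom (N :: 'k urep) V1 (bmat 3 8 pcN)" by (rule bhom[OF c _ _ _ _ _ _ _ _ chk_pcN]) simp_all
  have pv: "(bmat 3 8 pcN *\<^sub>v x) $ i = [x $ 4, x $ 5, x $ 6] ! i" if "x \<in> carrier_vec 8" "i < 3" for x :: "'k vec" and i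
    using bmat_mult_vec_index[OF that, of pcN] less3[OF that(2)] unfolding btr_pcN by auto
  show "hom_surj (N :: 'k urep) V1 (bmat 3 8 pcN)" unfolding hom_surj_def
  proof
    fix y :: "'k vec" assume y: "y \<in> carrier_vec (rdim V1)"
    show "\<exists>x\<in>carrier_vec (rdim N). bmat 3 8 pcN *\<^sub>v x = y"
    proof (intro bexI)
      show "bmat 3 8 pcN *\<^sub>v v8 0 0 0 0 (y$0) (y$1) (y$2) 0 = y"
      proof (rule eq_vecI)
        fix i assume "i < dim_vec y"
        then have i: "i < 3" using y by simp
        show "(bmat 3 8 pcN *\<^sub>v v8 0 0 0 0 (y$0) (y$1) (y$2) 0) $ i = y $ i"
          using pv[OF v8_carrier i] less3[OF i] by auto
      qed (use y in simp)
    qed simp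
  qed
  fix L assume a: "is_submod L (N :: 'k urep) \<and>
        (\<forall>x \<in> carrier_vec (rdim N). \<exists>l\<in>L. \<exists>k \<in> carrier_vec (rdim N).
            bmat 3 8 pcN *\<^sub>v k = 0\<^sub>v (rdim V1) \<and> x = l + k)"
  then have L: "is_submod L (N :: 'k urep)" by blast
  from a have H: "\<forall>x\<in>carrier_vec 8. \<exists>l\<in>L. \<exists>k\<in>carrier_vec 8. bmat 3 8 pcN *\<^sub>v k = 0\<^sub>v 3 \<and> x = l + k"
    by simp
  obtain l k where l: "l \<in> L" and k: "k \<in> carrier_vec 8" and pk: "bmat 3 8 pcN *\<^sub>v k = 0\<^sub>v 3"
    and e4: "v8 0 0 0 0 1 0 0 0 = l + k" using bspec[OF H v8_carrier[of 0 0 0 0 1 0 0 0]] by blast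
  have lc: "l \<in> carrier_vec 8" using subsetD[OF ssub[OF L l] l] by simp
  have k4: "k $ 4 = 0" using pv[OF k, of 0] arg_cong[OF pk, of "\<lambda>v. v $ 0"] by simp
  have k5: "k $ 5 = 0" using pv[OF k, of 1] arg_cong[OF pk, of "\<lambda>v. v $ 1"] by simp
  have k6: "k $ 6 = 0" using pv[OF k, of 2] arg_cong[OF pk, of "\<lambda>v. v $ 2"] by simp
  have "(v8 0 0 0 0 1 0 0 0 :: 'k vec) $ 4 = (l + k) $ 4" using e4 by simp
  then have l4: "l $ 4 = 1" using lc k k4 by simp
  have "(v8 0 0 0 0 1 0 0 0 :: 'k vec) $ 5 = (l + k) $ 5" using e4 by simp
  then have l5: "l $ 5 = 0" using lc k k5 by simp
  have "(v8 0 0 0 0 1 0 0 0 :: 'k vec) $ 6 = (l + k) $ 6" using e4 by simp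
  then have l6: "l $ 6 = 0" using lc k k6 by simp
  define l0 l1 l2 l3 l7 where "l0 = l$0" "l1 = l$1" "l2 = l$2" "l3 = l$3" "l7 = l$7"
  have leq: "l = v8 l0 l1 l2 l3 1 0 0 l7" using v8_eta[OF lc] l4 l5 l6 by (simp add: l0_l1_l2_l3_l7_def)
  have u1: "rc N *\<^sub>v l \<in> L" by (rule sC[OF L l])
  have u1e: "rc N *\<^sub>v l = v8 0 l1 0 l3 1 0 0 0" by (simp add: leq)
  have E7: "v8 0 0 0 0 0 0 0 1 \<in> L"
    using sA[OF L, OF sA[OF L, OF sA[OF L u1[unfolded u1e]]]] by simp
  have E3: "v8 0 0 0 1 0 0 0 0 \<in> L" using sB[OF L E7] by simp
  have u2: "v8 0 l1 0 l3 1 0 0 0 + (- l3) \<cdot>\<^sub>v v8 0 0 0 1 0 0 0 0 \<in> L"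
    by (rule sadd[OF L u1[unfolded u1e] ssm[OF L E3]])
  have u2e: "v8 0 l1 0 l3 1 0 0 0 + (- l3) \<cdot>\<^sub>v v8 0 0 0 1 0 0 0 0 = v8 0 l1 0 0 1 0 0 (0::'k)" by simp
  have E0: "v8 1 0 0 0 0 0 0 0 \<in> L" using sB[OF L u2[unfolded u2e]] by simp
  have E1: "v8 0 1 0 0 0 0 0 0 \<in> L" using sA[OF L E0] by simp
  have E2: "v8 0 0 1 0 0 0 0 0 \<in> L" using sA[OF L E1] by simp
  have E4: "v8 0 0 0 0 1 0 0 0 \<in> L"
  proof -
    have "v8 0 l1 0 0 1 0 0 0 + (- l1) \<cdot>\<^sub>v v8 0 1 0 0 0 0 0 0 \<in> L" by (rule sadd[OF L u2[unfolded u2e] ssm[OF L E1]])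
    then show ?thesis by simp
  qed
  have E5: "v8 0 0 0 0 0 1 0 0 \<in> L" using sA[OF L E4] by simp
  have E6: "v8 0 0 0 0 0 0 1 0 \<in> L" using sA[OF L E5] by simp
  show "L = carrier_vec (rdim N)" using span8[OF L _ E0 E1 E2 E3 E4 E5 E6 E7] by simp
qed

lemma nonzero_in: assumes L: "is_submod L (V :: 'k::field urep)" and ne: "L \<noteq> {0\<^sub>v (rdim V)}"
  shows "\<exists>y\<in>L. y \<noteq> 0\<^sub>v (rdim V)"
proof (rule ccontr)
  assume "\<not> ?thesis"
  then have "L \<subseteq> {0\<^sub>v (rdim V)}" by auto
  moreover have "0\<^sub>v (rdim V) \<in> L" using L unfolding is_submod_def by blast
  ultimately show False using ne by blast
qed

lemma btr_iM: "btr 8 1 [[3]] = [[],[],[],[0],[],[],[],[]]" by code_simp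
lemma chk_iM: "bhomchk 8 1 [[3]] [[]] [[]] [[]] MA MB MC" by code_simp

lemma iM_vec: assumes x: "x \<in> carrier_vec 1" shows "bmat 8 1 [[3]] *\<^sub>v x = v8 0 0 0 (x $ 0) 0 0 0 (0::'k::field)"
proof -
  have idx: "(bmat 8 1 [[3]] *\<^sub>v x) $ i = sum_list (map (\<lambda>l. x $ l) ([[],[],[],[0],[],[],[],[]] ! i))" if "i < 8" for i
    using bmat_mult_vec_index[OF x that, of "[[3]]"] unfolding btr_iM .
  show ?thesis
    apply (rule v8_ext)
    apply (rule mult_mat_vec_carrier[OF bmat_carrier x])
    apply (subst idx, simp, simp)+
    done
qed

lemma env_M: assumes c: "char2 TYPE('k::field)" shows "is_injective_envelope (M :: 'k urep) (bmat 8 1 [[3]]) V0"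
  unfolding is_injective_envelope_def
proof (intro conjI allI impI)
  show "is_injective (M :: 'k urep)" by (rule inj_M[OF c])
  show "is_umod (V0 :: 'k urep)" by (rule umod_V0[OF c])
  show "is_hom (V0 :: 'k urep) M (bmat 8 1 [[3]])" by (rule bhom[OF c _ _ _ _ _ _ _ _ chk_iM]) simp_all
  show "hom_inj (V0 :: 'k urep) M (bmat 8 1 [[3]])" unfolding hom_inj_def
  proof (intro ballI impI)
    fix x :: "'k vec" assume x: "x \<in> carrier_vec (rdim V0)" and z: "bmat 8 1 [[3]] *\<^sub>v x = 0\<^sub>v (rdim M)"
    then have x1: "x \<in> carrier_vec 1" by simp
    have "x $ 0 = 0" using z iM_vec[OF x1] by (simp add: v8_zero)
    then show "x = 0\<^sub>v (rdim V0)" using x1 by (intro eq_vecI) auto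
  qed
  fix L assume a: "is_submod L (M :: 'k urep) \<and> L \<noteq> {0\<^sub>v (rdim M)}"
  then have L: "is_submod L (M :: 'k urep)" by blast
  obtain y where y: "y \<in> L" and ynz: "y \<noteq> 0\<^sub>v 8" using nonzero_in[OF L] a by auto
  have yc: "y \<in> carrier_vec 8" using subsetD[OF ssub[OF L y] y] by simp
  define y0 y1 y2 y3 y4 y5 y6 y7 where "y0 = y$0" "y1 = y$1" "y2 = y$2" "y3 = y$3" "y4 = y$4" "y5 = y$5" "y6 = y$6" "y7 = y$7"
  have yeq: "y = v8 y0 y1 y2 y3 y4 y5 y6 y7" using v8_eta[OF yc] by (simp add: y0_y1_y2_y3_y4_y5_y6_y7_def)
  have nz: "\<not> (y0 = 0 \<and> y1 = 0 \<and> y2 = 0 \<and> y3 = 0 \<and> y4 = 0 \<and> y5 = 0 \<and> y6 = 0 \<and> y7 = 0)"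
    using ynz by (simp add: yeq v8_zero)
  have yL: "v8 y0 y1 y2 y3 y4 y5 y6 y7 \<in> L" using y yeq by simp
  have w1: "v8 0 0 0 y4 0 0 0 0 \<in> L"
    using sB[OF L, OF sB[OF L, OF sB[OF L, OF sA[OF L, OF sA[OF L, OF sA[OF L yL]]]]]] by simp
  have w2: "v8 0 0 0 y5 0 0 0 0 \<in> L"
    using sB[OF L, OF sB[OF L, OF sB[OF L, OF sA[OF L, OF sA[OF L yL]]]]] by simp
  have w3: "v8 0 0 0 y6 0 0 0 0 \<in> L"
    using sB[OF L, OF sB[OF L, OF sB[OF L, OF sA[OF L yL]]]] by simp
  have w4: "v8 0 0 0 y0 0 0 0 y4 \<in> L" using sA[OF L, OF sA[OF L, OF sA[OF L yL]]] by simp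
  have w5: "v8 0 0 y0 y1 0 0 y4 y5 \<in> L" using sA[OF L, OF sA[OF L yL]] by simp
  have w6: "v8 0 y0 y1 y2 0 y4 y5 y6 \<in> L" using sA[OF L yL] by simp
  have w7: "v8 y4 0 0 y7 0 0 0 0 \<in> L" using sB[OF L, OF sB[OF L, OF sB[OF L yL]]] by simp
  have "\<exists>c. c \<noteq> 0 \<and> v8 0 0 0 c 0 0 0 0 \<in> L"
  proof -
    consider "y4 \<noteq> 0" | "y4 = 0" "y5 \<noteq> 0" | "y4 = 0" "y5 = 0" "y6 \<noteq> 0"
      | "y4 = 0" "y5 = 0" "y6 = 0" "y0 \<noteq> 0" | "y4 = 0" "y5 = 0" "y6 = 0" "y0 = 0" "y1 \<noteq> 0"
      | "y4 = 0" "y5 = 0" "y6 = 0" "y0 = 0" "y1 = 0" "y2 \<noteq> 0"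
      | "y4 = 0" "y5 = 0" "y6 = 0" "y0 = 0" "y1 = 0" "y2 = 0" "y7 \<noteq> 0"
      | "y4 = 0" "y5 = 0" "y6 = 0" "y0 = 0" "y1 = 0" "y2 = 0" "y7 = 0" "y3 \<noteq> 0"
      using nz by blast
    then show ?thesis
    proof cases
      case 1 then show ?thesis using w1 by blast
    next
      case 2 then show ?thesis using w2 by blast
    next
      case 3 then show ?thesis using w3 by blast
    next
      case 4 then show ?thesis using w4 by auto
    next
      case 5 then show ?thesis using w5 by auto
    next
      case 6 then show ?thesis using w6 by auto
    next
      case 7 then show ?thesis using w7 by auto
    next
      case 8 then show ?thesis using yL by auto
    qed
  qed
  then obtain cc where cc: "cc \<noteq> 0" "v8 0 0 0 cc 0 0 0 0 \<in> L" by blast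
  show "\<exists>x\<in>carrier_vec (rdim V0). bmat 8 1 [[3]] *\<^sub>v x \<in> L \<and> bmat 8 1 [[3]] *\<^sub>v x \<noteq> 0\<^sub>v (rdim M)"
  proof (intro bexI conjI)
    let ?x = "vec 1 (\<lambda>_. cc)"
    show "?x \<in> carrier_vec (rdim V0)" by simp
    have e: "bmat 8 1 [[3]] *\<^sub>v ?x = v8 0 0 0 cc 0 0 0 0" using iM_vec[of ?x] by simp
    show "bmat 8 1 [[3]] *\<^sub>v ?x \<in> L" using e cc by simp
    show "bmat 8 1 [[3]] *\<^sub>v ?x \<noteq> 0\<^sub>v (rdim M)" using e cc by (simp add: v8_zero)
  qed
qed


lemma btr_iN: "btr 8 3 [[1],[2],[3]] = [[],[0],[1],[2],[],[],[],[]]" by code_simp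
lemma chk_iN: "bhomchk 8 3 [[1],[2],[3]] V1A V1B V1C NA NB NC" by code_simp

lemma iN_vec: assumes x: "x \<in> carrier_vec 3" shows "bmat 8 3 [[1],[2],[3]] *\<^sub>v x = v8 0 (x $ 0) (x $ 1) (x $ 2) 0 0 0 (0::'k::field)"
proof -
  have idx: "(bmat 8 3 [[1],[2],[3]] *\<^sub>v x) $ i = sum_list (map (\<lambda>l. x $ l) ([[],[0],[1],[2],[],[],[],[]] ! i))" if "i < 8" for i
    using bmat_mult_vec_index[OF x that, of "[[1],[2],[3]]"] unfolding btr_iN .
  show ?thesis
    apply (rule v8_ext)
    apply (rule mult_mat_vec_carrier[OF bmat_carrier x])
    apply (subst idx, simp, simp)+
    done
qed

lemma env_N: assumes c: "char2 TYPE('k::field)" shows "is_injective_envelope (N :: 'k urep) (bmat 8 3 [[1],[2],[3]]) V1"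
  unfolding is_injective_envelope_def
proof (intro conjI allI impI)
  show "is_injective (N :: 'k urep)" by (rule inj_N[OF c])
  show "is_umod (V1 :: 'k urep)" by (rule umod_V1[OF c])
  show "is_hom (V1 :: 'k urep) N (bmat 8 3 [[1],[2],[3]])" by (rule bhom[OF c _ _ _ _ _ _ _ _ chk_iN]) simp_all
  show "hom_inj (V1 :: 'k urep) N (bmat 8 3 [[1],[2],[3]])" unfolding hom_inj_def
  proof (intro ballI impI)
    fix x :: "'k vec" assume x: "x \<in> carrier_vec (rdim V1)" and z: "bmat 8 3 [[1],[2],[3]] *\<^sub>v x = 0\<^sub>v (rdim N)"
    then have x3: "x \<in> carrier_vec 3" by simp
    have "x $ 0 = 0" "x $ 1 = 0" "x $ 2 = 0" using z iN_vec[OF x3] by (simp_all add: v8_zero)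
    then show "x = 0\<^sub>v (rdim V1)" using x3 by (intro eq_vecI) (auto dest!: less3)
  qed
  fix L assume a: "is_submod L (N :: 'k urep) \<and> L \<noteq> {0\<^sub>v (rdim N)}"
  then have L: "is_submod L (N :: 'k urep)" by blast
  obtain y where y: "y \<in> L" and ynz: "y \<noteq> 0\<^sub>v 8" using nonzero_in[OF L] a by auto
  have yc: "y \<in> carrier_vec 8" using subsetD[OF ssub[OF L y] y] by simp
  define y0 y1 y2 y3 y4 y5 y6 y7 where "y0 = y$0" "y1 = y$1" "y2 = y$2" "y3 = y$3" "y4 = y$4" "y5 = y$5" "y6 = y$6" "y7 = y$7"
  have yeq: "y = v8 y0 y1 y2 y3 y4 y5 y6 y7" using v8_eta[OF yc] by (simp add: y0_y1_y2_y3_y4_y5_y6_y7_def)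
  have nz: "\<not> (y0 = 0 \<and> y1 = 0 \<and> y2 = 0 \<and> y3 = 0 \<and> y4 = 0 \<and> y5 = 0 \<and> y6 = 0 \<and> y7 = 0)"
    using ynz by (simp add: yeq v8_zero)
  have yL: "v8 y0 y1 y2 y3 y4 y5 y6 y7 \<in> L" using y yeq by simp
  have w1: "v8 0 0 y0 y4 0 0 0 0 \<in> L" using sB[OF L, OF sA[OF L, OF sA[OF L, OF sA[OF L yL]]]] by simp
  have w2: "v8 0 y0 (y1 + y4) y5 0 y4 0 0 \<in> L" using sB[OF L, OF sA[OF L, OF sA[OF L yL]]] by simp
  have w3: "v8 0 (y1 + y4) (y2 + y5) y6 y4 y5 0 0 \<in> L" using sB[OF L, OF sA[OF L yL]] by simp
  have w4: "v8 y4 (y2 + y5) (y3 + y6) y7 y5 y6 0 0 \<in> L" using sB[OF L yL] by simp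
  have w5: "v8 0 y0 y1 y2 0 y4 y5 y6 \<in> L" using sA[OF L yL] by simp
  have "\<exists>c1 c2 c3. \<not> (c1 = 0 \<and> c2 = 0 \<and> c3 = 0) \<and> v8 0 c1 c2 c3 0 0 0 0 \<in> L"
  proof -
    consider "y4 \<noteq> 0" | "y4 = 0" "y5 \<noteq> 0" | "y4 = 0" "y5 = 0" "y6 \<noteq> 0"
      | "y4 = 0" "y5 = 0" "y6 = 0" "y7 \<noteq> 0" | "y4 = 0" "y5 = 0" "y6 = 0" "y7 = 0" "y0 \<noteq> 0"
      | "y4 = 0" "y5 = 0" "y6 = 0" "y7 = 0" "y0 = 0"
      by blast
    then show ?thesis
    proof cases
      case 1 then show ?thesis using w1 by blast
    next
      case 2 then show ?thesis using w2 by auto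
    next
      case 3 then show ?thesis using w3 by auto
    next
      case 4 then show ?thesis using w4 by auto
    next
      case 5 then show ?thesis using w5 by auto
    next
      case 6 then show ?thesis using yL nz by auto
    qed
  qed
  then obtain c1 c2 c3 where cc: "\<not> (c1 = 0 \<and> c2 = 0 \<and> c3 = 0)" "v8 0 c1 c2 c3 0 0 0 0 \<in> L" by blast
  show "\<exists>x\<in>carrier_vec (rdim V1). bmat 8 3 [[1],[2],[3]] *\<^sub>v x \<in> L \<and> bmat 8 3 [[1],[2],[3]] *\<^sub>v x \<noteq> 0\<^sub>v (rdim N)"
  proof (intro bexI conjI)
    let ?x = "vec 3 (\<lambda>i. [c1, c2, c3] ! i)"
    show "?x \<in> carrier_vec (rdim V1)" by simp
    have e: "bmat 8 3 [[1],[2],[3]] *\<^sub>v ?x = v8 0 c1 c2 c3 0 0 0 0" using iN_vec[of ?x] by simp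
    show "bmat 8 3 [[1],[2],[3]] *\<^sub>v ?x \<in> L" using e cc by simp
    show "bmat 8 3 [[1],[2],[3]] *\<^sub>v ?x \<noteq> 0\<^sub>v (rdim N)" using e cc by (simp add: v8_zero)
  qed
qed

theorem proposition3p11:
  assumes "CHAR('k::alg_closed_field) = 2"
  shows "((\<exists>p. is_projective_cover (M::'k urep) p V0) \<and>
          (\<forall>P p. is_projective_cover P p (V0::'k urep) \<longrightarrow> umod_iso P M)) \<and>
         ((\<exists>i. is_injective_envelope (M::'k urep) i V0) \<and>
          (\<forall>I i. is_injective_envelope I i (V0::'k urep) \<longrightarrow> umod_iso I M)) \<and>
         ((\<exists>p. is_projective_cover (N::'k urep) p V1) \<and>
          (\<forall>P p. is_projective_cover P p (V1::'k urep) \<longrightarrow> umod_iso P N)) \<and>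
         ((\<exists>i. is_injective_envelope (N::'k urep) i V1) \<and>
          (\<forall>I i. is_injective_envelope I i (V1::'k urep) \<longrightarrow> umod_iso I N))"
proof -
  have c: "char2 TYPE('k)" by (rule char2I[OF assms])
  show ?thesis
  proof (intro conjI allI impI)
    show "\<exists>p. is_projective_cover (M::'k urep) p V0" using cover_M[OF c] by blast
    show "\<exists>i. is_injective_envelope (M::'k urep) i V0" using env_M[OF c] by blast
    show "\<exists>p. is_projective_cover (N::'k urep) p V1" using cover_N[OF c] by blast
    show "\<exists>i. is_injective_envelope (N::'k urep) i V1" using env_N[OF c] by blast
    fix P p
    show "is_projective_cover P p (V0::'k urep) \<Longrightarrow> umod_iso P M" using cover_unique cover_M[OF c] by blast
    show "is_projective_cover P p (V1::'k urep) \<Longrightarrow> umod_iso P N" using cover_unique cover_N[OF c] by blast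
    show "is_injective_envelope P p (V0::'k urep) \<Longrightarrow> umod_iso P M" using env_unique env_M[OF c] by blast
    show "is_injective_envelope P p (V1::'k urep) \<Longrightarrow> umod_iso P N" using env_unique env_N[OF c] by blast
  qed
qed

end
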